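(* Let $G$ be a connected graph. For any $s,t,p,q\in V(G)$, $$t(G)\,t(G_{pq,st})=t(G_{st})\,t(G_{pq})-\frac14\big[t(G_{ps})-t(G_{qs})-t(G_{pt})+t(G_{qt})\big]^2.$$ In particular, for any $s,p,q\in V(G)$, $$t(G)\,t(G_{pqs})=t(G_{ps})\,t(G_{pq})-\frac14\big[t(G_{ps})-t(G_{qs})+t(G_{pq})\big]^2.$$
   Context: Graphs are finite and may have multiple edges and loops; $t(H)$ is the number of spanning trees of $H$; a graph with one vertex has $t=1$. For vertices $x,y$ of a graph $H$, $H_{xy}$ is obtained by identifying $x$ and $y$, with the convention $t(H_{xx}):=0$. $G_{pq,st}$ is the graph obtained from $G_{pq}$ by identifying $s$ and $t$ (so $G_{pq,st}=(G_{pq})_{st}$), and $G_{pqs}$ is obtained from $G$ by identifying $p$, $q$ and $s$ into one vertex (i.e. $G_{pqs}=G_{pq,ps}$). *)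

theory Defs
  imports Main Complex_Main
begin

text \<open>A finite multigraph (loops and parallel edges allowed) is a triple
  (V, E, ends): vertex set V, edge set E, and for each edge its pair of endpoints.\<close>
type_synonym ('v,'e) mgraph = "'v set \<times> 'e set \<times> ('e \<Rightarrow> 'v \<times> 'v)"

definition verts :: "('v,'e) mgraph \<Rightarrow> 'v set" where "verts G = fst G"
definition edges :: "('v,'e) mgraph \<Rightarrow> 'e set" where "edges G = fst (snd G)"
definition ends :: "('v,'e) mgraph \<Rightarrow> 'e \<Rightarrow> 'v \<times> 'v" where "ends G = snd (snd G)"

definition wf_mgraph :: "('v,'e) mgraph \<Rightarrow> bool" where
  "wf_mgraph G \<longleftrightarrow> finite (verts G) \<and> finite (edges G) \<and>
     (\<forall>e\<in>edges G. fst (ends G e) \<in> verts G \<and> snd (ends G e) \<in> verts G)"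

definition joins :: "('v,'e) mgraph \<Rightarrow> 'e \<Rightarrow> 'v \<Rightarrow> 'v \<Rightarrow> bool" where
  "joins G e x y \<longleftrightarrow> ends G e = (x, y) \<or> ends G e = (y, x)"

definition connected_by :: "('v,'e) mgraph \<Rightarrow> 'e set \<Rightarrow> bool" where
  "connected_by G T \<longleftrightarrow>
     (\<forall>x\<in>verts G. \<forall>y\<in>verts G. (\<lambda>a b. \<exists>e\<in>T. joins G e a b)\<^sup>*\<^sup>* x y)"

definition connected_mgraph :: "('v,'e) mgraph \<Rightarrow> bool" where
  "connected_mgraph G \<longleftrightarrow> verts G \<noteq> {} \<and> connected_by G (edges G)"

text \<open>A cycle using edges of T: distinct edges es and distinct vertices vs
  (same positive length n), edge i joining vertex i and vertex (i+1) mod n.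
  (n = 1: a loop; n = 2: two parallel edges.)\<close>
definition is_cycle :: "('v,'e) mgraph \<Rightarrow> 'e set \<Rightarrow> 'e list \<Rightarrow> 'v list \<Rightarrow> bool" where
  "is_cycle G T es vs \<longleftrightarrow> es \<noteq> [] \<and> length vs = length es \<and> distinct es \<and> distinct vs \<and>
     set es \<subseteq> T \<and>
     (\<forall>i<length es. joins G (es ! i) (vs ! i) (vs ! (Suc i mod length es)))"

definition spanning_tree :: "('v,'e) mgraph \<Rightarrow> 'e set \<Rightarrow> bool" where
  "spanning_tree G T \<longleftrightarrow> T \<subseteq> edges G \<and> connected_by G T \<and> \<not> (\<exists>es vs. is_cycle G T es vs)"

definition ntrees :: "('v,'e) mgraph \<Rightarrow> nat" where
  "ntrees G = card {T. spanning_tree G T}"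

definition merge :: "'v \<Rightarrow> 'v \<Rightarrow> 'v \<Rightarrow> 'v" where
  "merge x y v = (if v = y then x else v)"

definition identify :: "'v \<Rightarrow> 'v \<Rightarrow> ('v,'e) mgraph \<Rightarrow> ('v,'e) mgraph" where
  "identify x y G = (merge x y ` verts G, edges G,
                     \<lambda>e. map_prod (merge x y) (merge x y) (ends G e))"

text \<open>t(H_xy), with the convention t(H_xx) = 0.\<close>
definition ntrees_id :: "('v,'e) mgraph \<Rightarrow> 'v \<Rightarrow> 'v \<Rightarrow> nat" where
  "ntrees_id G x y = (if x = y then 0 else ntrees (identify x y G))"

text \<open>t(G_{pq,st}) = t((G_pq)_st): s,t are viewed as vertices of G_pq (their images
  under the identification); the convention t(H_xx)=0 applies at both stages
  (if p = q then G_pp is degenerate and its count is 0, and so is that of any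
  further identification).\<close>
definition ntrees_id2 :: "('v,'e) mgraph \<Rightarrow> 'v \<Rightarrow> 'v \<Rightarrow> 'v \<Rightarrow> 'v \<Rightarrow> nat" where
  "ntrees_id2 G p q s t =
     (if p = q then 0 else ntrees_id (identify p q G) (merge p q s) (merge p q t))"

end

theory Submission
  imports Defs "HOL-Combinatorics.Permutations" "HOL-Library.FuncSet"
begin

definition detS :: "'a set \<Rightarrow> ('a \<Rightarrow> 'a \<Rightarrow> real) \<Rightarrow> real" where
  "detS S f = (\<Sum>p\<in>{p. p permutes S}. of_int (sign p) * (\<Prod>i\<in>S. f i (p i)))"

definition rowupd :: "('a \<Rightarrow> 'a \<Rightarrow> real) \<Rightarrow> 'a \<Rightarrow> ('a \<Rightarrow> real) \<Rightarrow> 'a \<Rightarrow> 'a \<Rightarrow> real" where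
  "rowupd f k v = (\<lambda>i j. if i = k then v j else f i j)"

definition unitv :: "'a \<Rightarrow> 'a \<Rightarrow> real" where
  "unitv k = (\<lambda>j. if j = k then 1 else 0)"

lemma detS_cong:
  assumes "\<And>i j. i \<in> S \<Longrightarrow> j \<in> S \<Longrightarrow> f i j = g i j"
  shows "detS S f = detS S g"
  unfolding detS_def
proof (rule sum.cong[OF refl])
  fix p assume "p \<in> {p. p permutes S}"
  then have p: "p permutes S" by simp
  show "of_int (sign p) * (\<Prod>i\<in>S. f i (p i)) = of_int (sign p) * (\<Prod>i\<in>S. g i (p i))"
    using assms permutes_in_image[OF p] by (auto intro!: prod.cong)
qed

lemma detS_empty [simp]: "detS {} f = 1"
  unfolding detS_def by simp

lemma detS_rowperm:
  assumes fin: "finite S" and q: "q permutes S"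
  shows "detS S (\<lambda>i j. f (q i) j) = of_int (sign q) * detS S f"
proof -
  have qi: "inv q permutes S" using permutes_inv[OF q] .
  have pq: "permutation q" using fin q permutation_permutes by blast
  have "detS S (\<lambda>i j. f (q i) j) = (\<Sum>p\<in>{p. p permutes S}. of_int (sign p) * (\<Prod>k\<in>S. f k (p (inv q k))))"
    unfolding detS_def
  proof (rule sum.cong[OF refl])
    fix p assume "p \<in> {p. p permutes S}"
    have "(\<Prod>i\<in>S. f (q i) (p i)) = (\<Prod>k\<in>q ` S. f k (p (inv q k)))"
      by (subst prod.reindex) (auto simp: permutes_inj_on[OF q] permutes_inverses[OF q] intro!: prod.cong)
    also have "q ` S = S" using permutes_image[OF q] .
    finally show "of_int (sign p) * (\<Prod>i\<in>S. f (q i) (p i)) = of_int (sign p) * (\<Prod>k\<in>S. f k (p (inv q k)))"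
      by simp
  qed
  also have "\<dots> = (\<Sum>p\<in>{p. p permutes S}. of_int (sign (p \<circ> q)) * (\<Prod>k\<in>S. f k ((p \<circ> q) (inv q k))))"
    by (rule sum_permutations_compose_right[OF q])
  also have "\<dots> = (\<Sum>p\<in>{p. p permutes S}. of_int (sign q) * (of_int (sign p) * (\<Prod>k\<in>S. f k (p k))))"
  proof (rule sum.cong[OF refl])
    fix p assume "p \<in> {p. p permutes S}"
    then have p: "p permutes S" by simp
    have "permutation p" using fin p permutation_permutes by blast
    then have "sign (p \<circ> q) = sign p * sign q" using sign_compose pq by blast
    moreover have "(p \<circ> q) (inv q k) = p k" for k by (simp add: permutes_inverses[OF q])
    ultimately show "of_int (sign (p \<circ> q)) * (\<Prod>k\<in>S. f k ((p \<circ> q) (inv q k))) =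
        of_int (sign q) * (of_int (sign p) * (\<Prod>k\<in>S. f k (p k)))" by simp
  qed
  also have "\<dots> = of_int (sign q) * detS S f"
    unfolding detS_def by (simp add: sum_distrib_left)
  finally show ?thesis .
qed

lemma detS_transpose:
  assumes fin: "finite S"
  shows "detS S (\<lambda>i j. f j i) = detS S f"
proof -
  have "detS S (\<lambda>i j. f j i) = (\<Sum>p\<in>{p. p permutes S}. of_int (sign p) * (\<Prod>k\<in>S. f k (inv p k)))"
    unfolding detS_def
  proof (rule sum.cong[OF refl])
    fix p assume "p \<in> {p. p permutes S}"
    then have p: "p permutes S" by simp
    have "(\<Prod>i\<in>S. f (p i) i) = (\<Prod>k\<in>p ` S. f k (inv p k))"
      by (subst prod.reindex) (auto simp: permutes_inj_on[OF p] permutes_inverses[OF p] intro!: prod.cong)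
    also have "p ` S = S" using permutes_image[OF p] .
    finally show "of_int (sign p) * (\<Prod>i\<in>S. f (p i) i) = of_int (sign p) * (\<Prod>k\<in>S. f k (inv p k))"
      by simp
  qed
  also have "\<dots> = (\<Sum>p\<in>{p. p permutes S}. of_int (sign (inv p)) * (\<Prod>k\<in>S. f k (inv (inv p) k)))"
    by (rule sum_permutations_inverse)
  also have "\<dots> = detS S f"
    unfolding detS_def
  proof (rule sum.cong[OF refl])
    fix p assume "p \<in> {p. p permutes S}"
    then have p: "p permutes S" by simp
    have "permutation p" using fin p permutation_permutes by blast
    then show "of_int (sign (inv p)) * (\<Prod>k\<in>S. f k (inv (inv p) k)) = of_int (sign p) * (\<Prod>i\<in>S. f i (p i))"
      by (simp add: sign_inverse permutes_inv_inv[OF p])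
  qed
  finally show ?thesis .
qed

lemma detS_alt:
  assumes fin: "finite S" and ij: "i \<in> S" "j \<in> S" "i \<noteq> j" and eq: "\<And>k. k \<in> S \<Longrightarrow> f i k = f j k"
  shows "detS S f = 0"
proof -
  have t: "Transposition.transpose i j permutes S" by (rule permutes_swap_id[OF ij(1,2)])
  have "detS S (\<lambda>a b. f (Transposition.transpose i j a) b) = detS S f"
    by (rule detS_cong) (auto simp: eq Transposition.transpose_def)
  moreover have "detS S (\<lambda>a b. f (Transposition.transpose i j a) b) = - detS S f"
    using detS_rowperm[OF fin t, of f] ij(3) by (simp add: sign_swap_id)
  ultimately show ?thesis by simp
qed



lemma prod_rowupd:
  assumes "finite S" "k \<in> S"
  shows "(\<Prod>i\<in>S. rowupd f k w i (p i)) = w (p k) * (\<Prod>i\<in>S - {k}. f i (p i))"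
proof -
  have "(\<Prod>i\<in>S. rowupd f k w i (p i)) = rowupd f k w k (p k) * (\<Prod>i\<in>S - {k}. rowupd f k w i (p i))"
    using assms by (rule prod.remove)
  also have "(\<Prod>i\<in>S - {k}. rowupd f k w i (p i)) = (\<Prod>i\<in>S - {k}. f i (p i))"
    by (rule prod.cong) (auto simp: rowupd_def)
  finally show ?thesis by (simp add: rowupd_def)
qed

lemma detS_row_expand:
  assumes fin: "finite S" and k: "k \<in> S"
  shows "detS S (rowupd f k v) = (\<Sum>j\<in>S. v j * detS S (rowupd f k (unitv j)))"
proof -
  note PR = prod_rowupd[OF fin k]
  have "(\<Sum>j\<in>S. v j * detS S (rowupd f k (unitv j)))
      = (\<Sum>j\<in>S. \<Sum>p\<in>{p. p permutes S}. v j * (of_int (sign p) * (unitv j (p k) * (\<Prod>i\<in>S - {k}. f i (p i)))))"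
  proof (rule sum.cong[OF refl])
    fix j assume "j \<in> S"
    show "v j * detS S (rowupd f k (unitv j)) = (\<Sum>p\<in>{p. p permutes S}. v j * (of_int (sign p) * (unitv j (p k) * (\<Prod>i\<in>S - {k}. f i (p i)))))"
      unfolding detS_def sum_distrib_left
      by (rule sum.cong[OF refl]) (simp only: PR)
  qed
  also have "\<dots> = (\<Sum>p\<in>{p. p permutes S}. \<Sum>j\<in>S. v j * (of_int (sign p) * (unitv j (p k) * (\<Prod>i\<in>S - {k}. f i (p i)))))"
    by (rule sum.swap)
  also have "\<dots> = (\<Sum>p\<in>{p. p permutes S}. of_int (sign p) * (v (p k) * (\<Prod>i\<in>S - {k}. f i (p i))))"
  proof (rule sum.cong[OF refl])
    fix p assume "p \<in> {p. p permutes S}"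
    then have pk: "p k \<in> S" using k permutes_in_image[of p S k] by simp
    have "(\<Sum>j\<in>S. v j * (of_int (sign p) * (unitv j (p k) * (\<Prod>i\<in>S - {k}. f i (p i)))))
        = (\<Sum>j\<in>S. if j = p k then v (p k) * (of_int (sign p) * (\<Prod>i\<in>S - {k}. f i (p i))) else 0)"
      by (rule sum.cong) (auto simp: unitv_def)
    also have "\<dots> = v (p k) * (of_int (sign p) * (\<Prod>i\<in>S - {k}. f i (p i)))"
      using fin pk by (simp add: sum.delta')
    finally show "(\<Sum>j\<in>S. v j * (of_int (sign p) * (unitv j (p k) * (\<Prod>i\<in>S - {k}. f i (p i))))) =
        of_int (sign p) * (v (p k) * (\<Prod>i\<in>S - {k}. f i (p i)))" by (simp add: mult_ac)
  qed
  also have "\<dots> = detS S (rowupd f k v)"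
    unfolding detS_def by (rule sum.cong[OF refl]) (simp only: PR)
  finally show ?thesis by (rule sym)
qed

lemma detS_row_add:
  assumes "finite S" "k \<in> S"
  shows "detS S (rowupd f k (\<lambda>j. a * v j + b * w j)) = a * detS S (rowupd f k v) + b * detS S (rowupd f k w)"
proof -
  note E = detS_row_expand[OF assms, of f]
  show ?thesis
    unfolding E[of "\<lambda>j. a * v j + b * w j"] E[of v] E[of w]
    by (simp add: sum.distrib sum_distrib_left algebra_simps)
qed

lemma detS_row_sum:
  assumes "finite S" "k \<in> S" "finite X"
  shows "detS S (rowupd f k (\<lambda>j. \<Sum>x\<in>X. g x j)) = (\<Sum>x\<in>X. detS S (rowupd f k (g x)))"
proof -
  note E = detS_row_expand[OF assms(1,2), of f]
  have "detS S (rowupd f k (\<lambda>j. \<Sum>x\<in>X. g x j)) = (\<Sum>j\<in>S. \<Sum>x\<in>X. g x j * detS S (rowupd f k (unitv j)))"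
    unfolding E[of "\<lambda>j. \<Sum>x\<in>X. g x j"] by (simp add: sum_distrib_right)
  also have "\<dots> = (\<Sum>x\<in>X. \<Sum>j\<in>S. g x j * detS S (rowupd f k (unitv j)))" by (rule sum.swap)
  also have "\<dots> = (\<Sum>x\<in>X. detS S (rowupd f k (g x)))"
    by (rule sum.cong[OF refl]) (rule E[symmetric])
  finally show ?thesis .
qed

lemma rowupd_same: "rowupd f k (f k) = f"
  by (auto simp: rowupd_def fun_eq_iff)

lemma detS_zero_row:
  assumes "finite S" "k \<in> S" "\<And>j. j \<in> S \<Longrightarrow> f k j = 0"
  shows "detS S f = 0"
proof -
  have "detS S f = detS S (rowupd f k (f k))" by (simp add: rowupd_same)
  also have "\<dots> = 0" unfolding detS_row_expand[OF assms(1,2), of f "f k"] using assms(3) by simp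
  finally show ?thesis .
qed

lemma permutes_fix_iff:
  assumes "k \<in> S"
  shows "(p permutes S \<and> p k = k) \<longleftrightarrow> p permutes (S - {k})"
proof
  assume a: "p permutes S \<and> p k = k"
  show "p permutes (S - {k})"
    using a unfolding permutes_def by (metis Diff_iff singletonD)
next
  assume a: "p permutes (S - {k})"
  then show "p permutes S \<and> p k = k"
    using permutes_subset[OF a] permutes_not_in[OF a] by auto
qed

lemma detS_unit_row:
  assumes fin: "finite S" and k: "k \<in> S" and u: "\<And>j. j \<in> S \<Longrightarrow> f k j = (if j = k then 1 else 0)"
  shows "detS S f = detS (S - {k}) f"
proof -
  let ?g = "\<lambda>p. of_int (sign p) * (\<Prod>i\<in>S. f i (p i))"
  have sub: "{p. p permutes (S - {k})} \<subseteq> {p. p permutes S}"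
    using permutes_fix_iff[OF k] by blast
  have "detS S f = sum ?g {p. p permutes (S - {k})}"
    unfolding detS_def
  proof (rule sum.mono_neutral_right)
    show "finite {p. p permutes S}" using fin finite_permutations by blast
    show "{p. p permutes (S - {k})} \<subseteq> {p. p permutes S}" by (rule sub)
    show "\<forall>p\<in>{p. p permutes S} - {p. p permutes (S - {k})}. ?g p = 0"
    proof
      fix p assume "p \<in> {p. p permutes S} - {p. p permutes (S - {k})}"
      then have p: "p permutes S" "p k \<noteq> k" using permutes_fix_iff[OF k] by auto
      have "p k \<in> S" using p(1) k permutes_in_image[of p S k] by simp
      then have "f k (p k) = 0" using u p(2) by simp
      then show "?g p = 0" using fin k by (simp add: prod.remove)
    qed
  qed
  also have "\<dots> = detS (S - {k}) f"
    unfolding detS_def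
  proof (rule sum.cong[OF refl])
    fix p assume "p \<in> {p. p permutes (S - {k})}"
    then have pk: "p k = k" using permutes_fix_iff[OF k] by blast
    show "?g p = of_int (sign p) * (\<Prod>i\<in>S - {k}. f i (p i))"
      using fin k pk u[of k] by (simp add: prod.remove)
  qed
  finally show ?thesis .
qed

lemma detS_single: "detS {a} f = f a a"
  unfolding detS_def by simp


lemma prod_pair:
  assumes "a \<noteq> b"
  shows "(\<Prod>i\<in>{a, b}. g i) = (g a * g b :: real)"
proof -
  have "(\<Prod>i\<in>{a, b}. g i) = g a * (\<Prod>i\<in>{b}. g i)"
    by (rule prod.insert) (use assms in auto)
  then show ?thesis by simp
qed

lemma detS_pair:
  assumes ab: "a \<noteq> b"
  shows "detS {a, b} f = f a a * f b b - f a b * f b a"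
proof -
  let ?t = "Transposition.transpose a b"
  have P: "{p. p permutes {a, b}} = {id, ?t}"
    by (auto simp: permutes_doubleton_iff)
  have ne: "id \<noteq> ?t"
    using ab by (metis id_apply transpose_apply_first)
  have s1: "detS {a, b} f = of_int (sign (id::'a\<Rightarrow>'a)) * (\<Prod>i\<in>{a, b}. f i (id i)) + of_int (sign ?t) * (\<Prod>i\<in>{a, b}. f i (?t i))"
    unfolding detS_def P using ne by (subst sum.insert) auto
  have s2: "(\<Prod>i\<in>{a, b}. f i (id i)) = f a a * f b b" unfolding id_apply by (rule prod_pair[OF ab])
  have s3: "(\<Prod>i\<in>{a, b}. f i (?t i)) = f a b * f b a" using prod_pair[OF ab, of "\<lambda>i. f i (?t i)"] ab by simp
  have s4: "sign ?t = -1" using ab by (simp add: sign_swap_id)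
  show ?thesis unfolding s1 s2 s3 s4 by simp
qed

lemma detS_unit_rows:
  assumes fin: "finite S" and T: "T \<subseteq> S"
    and u: "\<And>i j. i \<in> S - T \<Longrightarrow> j \<in> S \<Longrightarrow> f i j = (if j = i then 1 else 0)"
  shows "detS S f = detS T f"
proof -
  have "finite (S - T)" using fin by simp
  then show ?thesis using fin T u
  proof (induction "S - T" arbitrary: S rule: finite_induct)
    case empty
    then have "S = T" by blast
    then show ?case by simp
  next
    case (insert x F)
    have xS: "x \<in> S" "x \<notin> T" using insert.hyps(4) by blast+
    have "detS S f = detS (S - {x}) f"
      by (rule detS_unit_row[OF insert.prems(1) xS(1)]) (rule insert.prems(3), use xS in auto)
    also have "\<dots> = detS T f"
    proof (rule insert.hyps(3))
      show "F = S - {x} - T" using insert.hyps(2,4) by blast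
      show "finite (S - {x})" using insert.prems(1) by simp
      show "T \<subseteq> S - {x}" using insert.prems(2) xS by blast
      show "\<And>i j. i \<in> S - {x} - T \<Longrightarrow> j \<in> S - {x} \<Longrightarrow> f i j = (if j = i then 1 else 0)"
        using insert.prems(3) by auto
    qed
    finally show ?case .
  qed
qed

lemma detS_unit_cols:
  assumes fin: "finite S" and T: "T \<subseteq> S"
    and u: "\<And>i j. j \<in> S - T \<Longrightarrow> i \<in> S \<Longrightarrow> f i j = (if j = i then 1 else 0)"
  shows "detS S f = detS T f"
proof -
  have "detS S f = detS S (\<lambda>i j. f j i)" using detS_transpose[OF fin] by simp
  also have "\<dots> = detS T (\<lambda>i j. f j i)"
    by (rule detS_unit_rows[OF fin T]) (auto simp: u)
  also have "\<dots> = detS T f" using detS_transpose[of T f] fin T finite_subset by blast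
  finally show ?thesis .
qed

lemma detS_mult:
  assumes fin: "finite S"
  shows "detS S (\<lambda>i j. \<Sum>k\<in>S. A i k * B k j) = detS S A * detS S B"
proof -
  let ?P = "{p. p permutes S}"
  let ?F = "Pi\<^sub>E S (\<lambda>_. S)"
  let ?H = "\<lambda>g. (\<Prod>i\<in>S. A i (g i)) * detS S (\<lambda>i j. B (g i) j)"
  let ?ext = "\<lambda>g i. if i \<in> S then g i else i"
  have "detS S (\<lambda>i j. \<Sum>k\<in>S. A i k * B k j)
      = (\<Sum>p\<in>?P. of_int (sign p) * (\<Sum>g\<in>?F. \<Prod>i\<in>S. A i (g i) * B (g i) (p i)))"
    unfolding detS_def
    by (rule sum.cong[OF refl]) (simp only: prod_sum_PiE[OF fin finite_subset[OF subset_refl fin]])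
  also have "\<dots> = (\<Sum>p\<in>?P. \<Sum>g\<in>?F. of_int (sign p) * ((\<Prod>i\<in>S. A i (g i)) * (\<Prod>i\<in>S. B (g i) (p i))))"
    by (simp only: sum_distrib_left prod.distrib)
  also have "\<dots> = (\<Sum>g\<in>?F. \<Sum>p\<in>?P. of_int (sign p) * ((\<Prod>i\<in>S. A i (g i)) * (\<Prod>i\<in>S. B (g i) (p i))))"
    by (rule sum.swap)
  also have "\<dots> = (\<Sum>g\<in>?F. ?H g)"
    unfolding detS_def by (simp only: sum_distrib_left mult_ac)
  also have "\<dots> = (\<Sum>g\<in>{g\<in>?F. inj_on g S}. ?H g)"
  proof (rule sum.mono_neutral_right)
    show "finite ?F" using fin by (simp add: finite_PiE)
    show "{g\<in>?F. inj_on g S} \<subseteq> ?F" by blast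
    show "\<forall>g\<in>?F - {g\<in>?F. inj_on g S}. ?H g = 0"
    proof
      fix g assume "g \<in> ?F - {g\<in>?F. inj_on g S}"
      then obtain i j where ij: "i \<in> S" "j \<in> S" "i \<noteq> j" "g i = g j"
        unfolding inj_on_def by blast
      have "detS S (\<lambda>i j. B (g i) j) = 0"
        by (rule detS_alt[OF fin ij(1-3)]) (simp add: ij(4))
      then show "?H g = 0" by simp
    qed
  qed
  also have "\<dots> = (\<Sum>p\<in>?P. of_int (sign p) * (\<Prod>i\<in>S. A i (p i)) * detS S B)"
  proof (rule sum.reindex_bij_witness[where i = "\<lambda>p. restrict p S" and j = ?ext])
    fix g assume g: "g \<in> {g\<in>?F. inj_on g S}"
    show "restrict (?ext g) S = g"
      using g by (auto simp: fun_eq_iff restrict_def PiE_def extensional_def)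
    have pg: "?ext g permutes S"
      by (rule inj_imp_permutes[OF _ fin]) (use g in \<open>auto simp: inj_on_def PiE_def\<close>)
    then show "?ext g \<in> ?P" by simp
    have "detS S (\<lambda>i j. B (g i) j) = detS S (\<lambda>i j. B (?ext g i) j)"
      by (rule detS_cong) simp
    also have "\<dots> = of_int (sign (?ext g)) * detS S B" by (rule detS_rowperm[OF fin pg])
    finally show "of_int (sign (?ext g)) * (\<Prod>i\<in>S. A i (?ext g i)) * detS S B = ?H g"
      by simp
  next
    fix p assume "p \<in> ?P"
    then have p: "p permutes S" by simp
    show "?ext (restrict p S) = p"
      using permutes_not_in[OF p] by (auto simp: fun_eq_iff)
    show "restrict p S \<in> {g\<in>?F. inj_on g S}"
      using permutes_inj_on[OF p] permutes_in_image[OF p] by (auto simp: inj_on_def)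
  qed
  also have "\<dots> = detS S A * detS S B"
    unfolding detS_def by (simp add: sum_distrib_right)
  finally show ?thesis .
qed

lemma detS_zero_rowsum:
  assumes fin: "finite S" and ne: "S \<noteq> {}" and z: "\<And>i. i \<in> S \<Longrightarrow> (\<Sum>j\<in>S. f i j) = 0"
  shows "detS S f = 0"
proof -
  obtain k where k: "k \<in> S" using ne by blast
  let ?g = "\<lambda>i j. f j i"
  have A: "(\<Sum>x\<in>S. detS S (rowupd ?g k (?g x))) = 0"
  proof -
    have "(\<Sum>x\<in>S. detS S (rowupd ?g k (?g x))) = detS S (rowupd ?g k (\<lambda>j. \<Sum>x\<in>S. ?g x j))"
      by (rule detS_row_sum[OF fin k fin, symmetric])
    also have "\<dots> = 0"
      by (rule detS_zero_row[OF fin k]) (simp add: rowupd_def z)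
    finally show ?thesis .
  qed
  have B: "(\<Sum>x\<in>S. detS S (rowupd ?g k (?g x))) = detS S (rowupd ?g k (?g k))"
  proof (rule sum.mono_neutral_right[OF fin, of "{k}", simplified])
    show "k \<in> S" by (rule k)
    show "\<forall>x\<in>S - {k}. detS S (rowupd ?g k (?g x)) = 0"
    proof
      fix x assume x: "x \<in> S - {k}"
      show "detS S (rowupd ?g k (?g x)) = 0"
        by (rule detS_alt[OF fin k, of x]) (use x in \<open>auto simp: rowupd_def\<close>)
    qed
  qed
  have "detS S f = detS S ?g" using detS_transpose[OF fin, of f] by simp
  also have "\<dots> = 0"
  proof -
    have C: "rowupd ?g k (?g k) = ?g" by (auto simp: rowupd_def fun_eq_iff)
    show ?thesis using A B unfolding C by simp
  qed
  finally show ?thesis .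
qed


definition adjS :: "'a set \<Rightarrow> ('a \<Rightarrow> 'a \<Rightarrow> real) \<Rightarrow> 'a \<Rightarrow> 'a \<Rightarrow> real" where
  "adjS S X x y = detS S (rowupd X y (unitv x))"

definition mmul :: "'a set \<Rightarrow> ('a \<Rightarrow> 'a \<Rightarrow> real) \<Rightarrow> ('a \<Rightarrow> 'a \<Rightarrow> real) \<Rightarrow> 'a \<Rightarrow> 'a \<Rightarrow> real" where
  "mmul S X Y = (\<lambda>i j. \<Sum>k\<in>S. X i k * Y k j)"

definition mergeM :: "'a \<Rightarrow> 'a \<Rightarrow> ('a \<Rightarrow> 'a \<Rightarrow> real) \<Rightarrow> 'a \<Rightarrow> 'a \<Rightarrow> real" where
  "mergeM a b X = (\<lambda>i j. X i j + (if i = a then X b j else 0) + (if j = a then X i b else 0)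
                          + (if i = a \<and> j = a then X b b else 0))"

definition Emat :: "'a \<Rightarrow> 'a \<Rightarrow> 'a \<Rightarrow> 'a \<Rightarrow> real" where
  "Emat a b = (\<lambda>l j. (if l = j then 1 else 0) + (if l = b \<and> j = a then 1 else 0))"

lemma detS_row_scale:
  assumes "finite S" "k \<in> S"
  shows "detS S (rowupd f k (\<lambda>j. c * v j)) = c * detS S (rowupd f k v)"
  using detS_row_add[OF assms, of f c v 0 v] by simp

lemma detS_scaled_unit_row:
  assumes fin: "finite S" and k: "k \<in> S" and u: "\<And>j. j \<in> S \<Longrightarrow> f k j = c * unitv k j"
  shows "detS S f = c * detS (S - {k}) f"
proof -
  have "detS S f = detS S (rowupd f k (\<lambda>j. c * unitv k j))"
    by (rule detS_cong) (auto simp: rowupd_def u)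
  also have "\<dots> = c * detS S (rowupd f k (unitv k))" by (rule detS_row_scale[OF fin k])
  also have "detS S (rowupd f k (unitv k)) = detS (S - {k}) (rowupd f k (unitv k))"
    by (rule detS_unit_row[OF fin k]) (auto simp: rowupd_def unitv_def)
  also have "\<dots> = detS (S - {k}) f"
    by (rule detS_cong) (auto simp: rowupd_def)
  finally show ?thesis .
qed

lemma detS_scaled_unit_col:
  assumes fin: "finite S" and k: "k \<in> S" and u: "\<And>i. i \<in> S \<Longrightarrow> f i k = c * unitv k i"
  shows "detS S f = c * detS (S - {k}) f"
proof -
  have "detS S f = detS S (\<lambda>i j. f j i)" using detS_transpose[OF fin] by simp
  also have "\<dots> = c * detS (S - {k}) (\<lambda>i j. f j i)"
    by (rule detS_scaled_unit_row[OF fin k]) (simp add: u)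
  also have "detS (S - {k}) (\<lambda>i j. f j i) = detS (S - {k}) f"
    using detS_transpose[of "S - {k}" f] fin by simp
  finally show ?thesis .
qed

lemma rowupd_expand_sum:
  assumes fin: "finite S" and k: "k \<in> S"
  shows "(\<Sum>l\<in>S. c l * adjS S X l k) = detS S (rowupd X k c)"
proof -
  have "detS S (rowupd X k c) = (\<Sum>j\<in>S. c j * detS S (rowupd X k (unitv j)))"
    by (rule detS_row_expand[OF fin k])
  then show ?thesis by (simp add: adjS_def)
qed

lemma detS_Emat:
  assumes fin: "finite S" and ab: "a \<in> S" "b \<in> S" "a \<noteq> b"
  shows "detS S (Emat a b) = 1"
proof -
  have "detS S (Emat a b) = detS {b} (Emat a b)"
    by (rule detS_unit_rows[OF fin]) (use ab in \<open>auto simp: Emat_def\<close>)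
  also have "\<dots> = 1" using ab by (simp add: detS_single Emat_def)
  finally show ?thesis .
qed

lemma mergeM_as_prod:
  assumes fin: "finite S" and ab: "a \<in> S" "b \<in> S" "a \<noteq> b" and ij: "i \<in> S" "j \<in> S"
  shows "mergeM a b X i j = mmul S (mmul S (\<lambda>i k. Emat a b k i) X) (Emat a b) i j"
proof -
  have 1: "(\<Sum>k\<in>S. Emat a b k i * X k l) = X i l + (if i = a then X b l else 0)" for l
  proof -
    have "(\<Sum>k\<in>S. Emat a b k i * X k l) = (\<Sum>k\<in>S. (if k = i then X k l else 0) + (if k = b \<and> i = a then X k l else 0))"
      by (rule sum.cong) (auto simp: Emat_def)
    also have "\<dots> = X i l + (if i = a then X b l else 0)"
      using fin ij ab by (simp add: sum.distrib sum.delta' )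
    finally show ?thesis .
  qed
  have "mmul S (mmul S (\<lambda>i k. Emat a b k i) X) (Emat a b) i j
      = (\<Sum>l\<in>S. (X i l + (if i = a then X b l else 0)) * Emat a b l j)"
    by (simp add: mmul_def 1)
  also have "\<dots> = (\<Sum>l\<in>S. (if l = j then X i l + (if i = a then X b l else 0) else 0)
        + (if l = b \<and> j = a then X i l + (if i = a then X b l else 0) else 0))"
    by (rule sum.cong) (auto simp: Emat_def algebra_simps)
  also have "\<dots> = mergeM a b X i j"
    using fin ij ab by (simp add: sum.distrib sum.delta' mergeM_def)
  finally show ?thesis by simp
qed

lemma detS_mergeM_full:
  assumes fin: "finite S" and ab: "a \<in> S" "b \<in> S" "a \<noteq> b"
  shows "detS S (mergeM a b X) = detS S X"
proof -
  have "detS S (mergeM a b X) = detS S (mmul S (mmul S (\<lambda>i k. Emat a b k i) X) (Emat a b))"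
    by (rule detS_cong) (rule mergeM_as_prod[OF fin ab])
  also have "\<dots> = detS S (\<lambda>i k. Emat a b k i) * detS S X * detS S (Emat a b)"
    unfolding mmul_def detS_mult[OF fin] by simp
  also have "detS S (\<lambda>i k. Emat a b k i) = 1"
    using detS_transpose[OF fin, of "Emat a b"] detS_Emat[OF fin ab] by simp
  finally show ?thesis using detS_Emat[OF fin ab] by simp
qed

lemma detS_col_row_unit:
  assumes fin: "finite S" and xy: "x \<in> S" "y \<in> S"
  shows "detS S (\<lambda>i j. if j = y then unitv x i else X i j) = detS S (rowupd X x (unitv y))"
  unfolding detS_def
proof (rule sum.cong[OF refl])
  fix p assume "p \<in> {p. p permutes S}"
  then have p: "p permutes S" by simp
  show "of_int (sign p) * (\<Prod>i\<in>S. (if p i = y then unitv x i else X i (p i))) =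
        of_int (sign p) * (\<Prod>i\<in>S. rowupd X x (unitv y) i (p i))"
  proof (cases "p x = y")
    case True
    have "(\<Prod>i\<in>S. (if p i = y then unitv x i else X i (p i))) = (\<Prod>i\<in>S. rowupd X x (unitv y) i (p i))"
    proof (rule prod.cong[OF refl])
      fix i assume i: "i \<in> S"
      show "(if p i = y then unitv x i else X i (p i)) = rowupd X x (unitv y) i (p i)"
        using True permutes_inj[OF p] by (auto simp: rowupd_def unitv_def inj_def)
    qed
    then show ?thesis by simp
  next
    case False
    obtain i0 where i0: "i0 = inv p y" by blast
    have pi0: "p i0 = y" using i0 permutes_inverses[OF p] by simp
    have i0S: "i0 \<in> S" using pi0 xy(2) permutes_in_image[OF p, of i0] by simp
    have i0x: "i0 \<noteq> x" using pi0 False by auto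
    have "(\<Prod>i\<in>S. (if p i = y then unitv x i else X i (p i))) = 0"
      by (rule prod_zero[OF fin]) (use i0S pi0 i0x in \<open>auto intro!: bexI[of _ i0] simp: unitv_def\<close>)
    moreover have "(\<Prod>i\<in>S. rowupd X x (unitv y) i (p i)) = 0"
      by (rule prod_zero[OF fin]) (use xy False in \<open>auto intro!: bexI[of _ x] simp: unitv_def rowupd_def\<close>)
    ultimately show ?thesis by simp
  qed
qed

lemma adjS_sym:
  assumes fin: "finite S" and xy: "x \<in> S" "y \<in> S" and sym: "\<And>i j. X i j = X j i"
  shows "adjS S X x y = adjS S X y x"
proof -
  have "adjS S X x y = detS S (\<lambda>i j. rowupd X y (unitv x) j i)"
    unfolding adjS_def using detS_transpose[OF fin] by simp
  also have "\<dots> = detS S (\<lambda>i j. if j = y then unitv x i else X i j)"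
    by (rule detS_cong) (auto simp: rowupd_def sym)
  also have "\<dots> = adjS S X y x"
    unfolding adjS_def by (rule detS_col_row_unit[OF fin xy])
  finally show ?thesis .
qed


lemma AM_entry:
  assumes fin: "finite S" and ij: "i \<in> S" "j \<in> S"
  shows "(\<Sum>k\<in>S. A i k * adjS S A k j) = (if i = j then detS S A else 0)"
proof -
  have "(\<Sum>k\<in>S. A i k * adjS S A k j) = detS S (rowupd A j (A i))"
    by (rule rowupd_expand_sum[OF fin ij(2)])
  also have "\<dots> = (if i = j then detS S A else 0)"
  proof (cases "i = j")
    case True
    then show ?thesis by (simp add: rowupd_same)
  next
    case False
    show ?thesis using False
      by (simp, intro detS_alt[OF fin ij(1) ij(2) False]) (auto simp: rowupd_def)
  qed
  finally show ?thesis .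
qed

lemma jacobi:
  assumes fin: "finite S" and ab: "a \<in> S" "b \<in> S" "a \<noteq> b" and D: "detS S A \<noteq> 0"
  shows "adjS S A a a * adjS S A b b - adjS S A a b * adjS S A b a = detS S A * detS (S - {a, b}) A"
proof -
  let ?D = "detS S A"
  define M where "M = (\<lambda>i j. if j = a \<or> j = b then adjS S A i j else (if i = j then 1 else (0::real)))"
  have AM: "mmul S A M i j = (if j = a \<or> j = b then (if i = j then ?D else 0) else A i j)"
    if ij: "i \<in> S" "j \<in> S" for i j
  proof (cases "j = a \<or> j = b")
    case True
    then show ?thesis unfolding mmul_def M_def using AM_entry[OF fin ij] by simp
  next
    case False
    have "mmul S A M i j = (\<Sum>k\<in>S. if k = j then A i k else 0)"
      unfolding mmul_def M_def using False by (intro sum.cong) auto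
    also have "\<dots> = A i j" using fin ij by (simp add: sum.delta')
    finally show ?thesis using False by simp
  qed
  have dM: "detS S M = adjS S A a a * adjS S A b b - adjS S A a b * adjS S A b a"
  proof -
    have "detS S M = detS {a, b} M"
      by (rule detS_unit_cols[OF fin]) (use ab in \<open>auto simp: M_def\<close>)
    also have "\<dots> = M a a * M b b - M a b * M b a" by (rule detS_pair[OF ab(3)])
    finally show ?thesis by (simp add: M_def)
  qed
  have dAM: "detS S (mmul S A M) = ?D * ?D * detS (S - {a, b}) A"
  proof -
    let ?N = "\<lambda>i j. if j = a \<or> j = b then (if i = j then ?D else 0) else A i j"
    have "detS S (mmul S A M) = detS S ?N" by (rule detS_cong) (rule AM)
    also have "\<dots> = ?D * detS (S - {a}) ?N"
      by (rule detS_scaled_unit_col[OF fin ab(1)]) (auto simp: unitv_def)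
    also have "detS (S - {a}) ?N = ?D * detS (S - {a} - {b}) ?N"
      by (rule detS_scaled_unit_col) (use fin ab in \<open>auto simp: unitv_def\<close>)
    also have "detS (S - {a} - {b}) ?N = detS (S - {a, b}) A"
      by (subst Diff_insert2[symmetric]) (rule detS_cong, auto)
    finally show ?thesis by simp
  qed
  have "?D * detS S M = ?D * (?D * detS (S - {a, b}) A)"
    using dAM unfolding mmul_def detS_mult[OF fin] by simp
  then have "detS S M = ?D * detS (S - {a, b}) A" using D by simp
  then show ?thesis using dM by simp
qed

lemma rowupd_commute: "a \<noteq> b \<Longrightarrow> rowupd (rowupd X a v) b w = rowupd (rowupd X b w) a v"
  by (auto simp: rowupd_def fun_eq_iff)

lemma detS_swap_rowupd:
  assumes fin: "finite S" and ab: "a \<in> S" "b \<in> S" "a \<noteq> b"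
  shows "detS S (rowupd (rowupd X b u) a (X b)) = - detS S (rowupd X a u)"
proof -
  let ?t = "Transposition.transpose a b"
  let ?Y = "rowupd (rowupd X b u) a (X b)"
  have t: "?t permutes S" by (rule permutes_swap_id[OF ab(1,2)])
  have "detS S (\<lambda>i j. ?Y (?t i) j) = of_int (sign ?t) * detS S ?Y" by (rule detS_rowperm[OF fin t])
  moreover have "detS S (\<lambda>i j. ?Y (?t i) j) = detS S (rowupd X a u)"
    by (rule detS_cong) (use ab in \<open>auto simp: rowupd_def Transposition.transpose_def\<close>)
  moreover have "sign ?t = -1" using ab by (simp add: sign_swap_id)
  ultimately show ?thesis by simp
qed

lemma merge_lemma:
  assumes fin: "finite S" and ab: "a \<in> S" "b \<in> S" "a \<noteq> b"
  shows "detS (S - {b}) (mergeM a b X) = adjS S X a a + adjS S X b b - adjS S X a b - adjS S X b a"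
proof -
  define N where "N = rowupd (rowupd X a (\<lambda>j. X a j + X b j)) b (\<lambda>j. unitv b j - unitv a j)"
  have eq: "rowupd (mergeM a b X) b (unitv b) i j = mmul S N (Emat a b) i j" if ij: "i \<in> S" "j \<in> S" for i j
  proof -
    have "mmul S N (Emat a b) i j = (\<Sum>l\<in>S. (if l = j then N i l else 0) + (if l = b \<and> j = a then N i l else 0))"
      unfolding mmul_def by (rule sum.cong) (auto simp: Emat_def algebra_simps)
    also have "\<dots> = N i j + (if j = a then N i b else 0)"
      using fin ij ab by (simp add: sum.distrib sum.delta')
    finally show ?thesis
      using ab by (auto simp: N_def rowupd_def mergeM_def unitv_def)
  qed
  have "detS (S - {b}) (mergeM a b X) = detS S (rowupd (mergeM a b X) b (unitv b))"
  proof -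
    have "detS S (rowupd (mergeM a b X) b (unitv b)) = detS (S - {b}) (rowupd (mergeM a b X) b (unitv b))"
      by (rule detS_unit_row[OF fin ab(2)]) (auto simp: rowupd_def unitv_def)
    also have "\<dots> = detS (S - {b}) (mergeM a b X)" by (rule detS_cong) (auto simp: rowupd_def)
    finally show ?thesis by simp
  qed
  also have "\<dots> = detS S (mmul S N (Emat a b))" by (rule detS_cong) (rule eq)
  also have "\<dots> = detS S N" unfolding mmul_def detS_mult[OF fin] detS_Emat[OF fin ab] by simp
  also have "detS S N = detS S (rowupd (rowupd X a (\<lambda>j. X a j + X b j)) b (unitv b))
                       - detS S (rowupd (rowupd X a (\<lambda>j. X a j + X b j)) b (unitv a))"
    unfolding N_def using detS_row_add[OF fin ab(2), of "rowupd X a (\<lambda>j. X a j + X b j)" 1 "unitv b" "-1" "unitv a"]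
    by simp
  also have R: "detS S (rowupd (rowupd X a (\<lambda>j. X a j + X b j)) b u) = detS S (rowupd X b u) - detS S (rowupd X a u)" for u
  proof -
    have "detS S (rowupd (rowupd X a (\<lambda>j. X a j + X b j)) b u) = detS S (rowupd (rowupd X b u) a (\<lambda>j. 1 * X a j + 1 * X b j))"
      using rowupd_commute[OF ab(3)] by simp
    also have "\<dots> = detS S (rowupd (rowupd X b u) a (X a)) + detS S (rowupd (rowupd X b u) a (X b))"
      using detS_row_add[OF fin ab(1), of "rowupd X b u" 1 "X a" 1 "X b"] by simp
    also have "rowupd (rowupd X b u) a (X a) = rowupd X b u"
      using ab(3) by (auto simp: rowupd_def fun_eq_iff)
    also have "detS S (rowupd (rowupd X b u) a (X b)) = - detS S (rowupd X a u)"
      by (rule detS_swap_rowupd[OF fin ab])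
    finally show ?thesis by simp
  qed
  finally show ?thesis unfolding adjS_def R by simp
qed

definition reach :: "('v,'e) mgraph \<Rightarrow> 'e set \<Rightarrow> 'v \<Rightarrow> 'v \<Rightarrow> bool" where
  "reach G T = (\<lambda>a b. \<exists>e\<in>T. joins G e a b)\<^sup>*\<^sup>*"

definition forest :: "('v,'e) mgraph \<Rightarrow> 'e set \<Rightarrow> bool" where
  "forest G T \<longleftrightarrow> (\<forall>f\<in>T. fst (ends G f) \<noteq> snd (ends G f) \<and>
      \<not> reach G (T - {f}) (fst (ends G f)) (snd (ends G f)))"

lemma connected_by_reach: "connected_by G T \<longleftrightarrow> (\<forall>x\<in>verts G. \<forall>y\<in>verts G. reach G T x y)"
  unfolding connected_by_def reach_def ..

lemma joins_sym: "joins G e a b \<Longrightarrow> joins G e b a"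
  unfolding joins_def by auto

lemma reach_refl [simp]: "reach G T a a"
  unfolding reach_def by simp

lemma reach_step: "e \<in> T \<Longrightarrow> joins G e a b \<Longrightarrow> reach G T a b"
  unfolding reach_def by (rule r_into_rtranclp) blast

lemma reach_trans: "reach G T a b \<Longrightarrow> reach G T b c \<Longrightarrow> reach G T a c"
  unfolding reach_def by (rule rtranclp_trans)

lemma reach_sym:
  assumes "reach G T a b"
  shows "reach G T b a"
proof -
  let ?R = "\<lambda>a b. \<exists>e\<in>T. joins G e a b"
  have s: "?R y x" if "?R x y" for x y
  proof -
    from that obtain e where e: "e \<in> T" "joins G e x y" by blast
    have "joins G e y x" using e(2) unfolding joins_def by auto
    then show ?thesis using e(1) by blast
  qed
  have "?R\<^sup>*\<^sup>* a b" using assms unfolding reach_def .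
  then have "?R\<^sup>*\<^sup>* b a"
  proof (induction rule: rtranclp_induct)
    case base
    then show ?case by (rule rtranclp.rtrancl_refl)
  next
    case (step y z)
    have "?R\<^sup>*\<^sup>* z y" using s[OF step.hyps(2)] by (rule r_into_rtranclp)
    then show ?case using step.IH by (rule rtranclp_trans)
  qed
  then show ?thesis unfolding reach_def .
qed

lemma reach_mono: "reach G S a b \<Longrightarrow> S \<subseteq> T \<Longrightarrow> reach G T a b"
  unfolding reach_def
  by (erule rtranclp_mono[THEN predicate2D, rotated]) blast

lemma reach_ends: "f \<in> T \<Longrightarrow> reach G T (fst (ends G f)) (snd (ends G f))"
  by (rule reach_step[of f]) (auto simp: joins_def)

lemma joins_ends_cases: "joins G f a b \<Longrightarrow> (fst (ends G f) = a \<and> snd (ends G f) = b) \<or> (fst (ends G f) = b \<and> snd (ends G f) = a)"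
  unfolding joins_def by auto

lemma reach_joins_ends:
  assumes "joins G f a b" "reach G T a b"
  shows "reach G T (fst (ends G f)) (snd (ends G f))"
  using joins_ends_cases[OF assms(1)] assms(2) reach_sym by metis

definition is_path :: "('v,'e) mgraph \<Rightarrow> 'e set \<Rightarrow> 'e list \<Rightarrow> 'v list \<Rightarrow> bool" where
  "is_path G S es vs \<longleftrightarrow> vs \<noteq> [] \<and> length vs = Suc (length es) \<and> distinct vs \<and> set es \<subseteq> S \<and>
     (\<forall>i<length es. joins G (es ! i) (vs ! i) (vs ! Suc i))"

lemma simple_path_exists:
  assumes "reach G S u w"
  shows "\<exists>es vs. is_path G S es vs \<and> hd vs = u \<and> last vs = w"
  using assms unfolding reach_def
proof (induction rule: rtranclp_induct)
  case base
  show ?case by (rule exI[of _ "[]"], rule exI[of _ "[u]"]) (simp add: is_path_def)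
next
  case (step z w)
  obtain es vs where p: "is_path G S es vs" "hd vs = u" "last vs = z" using step.IH by blast
  obtain g where g: "g \<in> S" "joins G g z w" using step.hyps(2) by blast
  have lv: "length vs = Suc (length es)" "vs \<noteq> []" using p(1) by (auto simp: is_path_def)
  show ?case
  proof (cases "w \<in> set vs")
    case True
    then obtain k where k: "k < length vs" "vs ! k = w" by (auto simp: in_set_conv_nth)
    let ?vs = "take (Suc k) vs" and ?es = "take k es"
    have "is_path G S ?es ?vs"
      using p(1) k lv unfolding is_path_def
      by (auto simp: min_def dest: in_set_takeD)
    moreover have "hd ?vs = u" using p(2) lv by (simp add: hd_take)
    moreover have "last ?vs = w" using k by (simp add: take_Suc_conv_app_nth)
    ultimately show ?thesis by blast
  next
    case False
    let ?vs = "vs @ [w]" and ?es = "es @ [g]"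
    have lastz: "vs ! length es = z" using p(3) lv by (simp add: last_conv_nth)
    have "is_path G S ?es ?vs"
      unfolding is_path_def
    proof (intro conjI allI impI)
      show "?vs \<noteq> []" by simp
      show "length ?vs = Suc (length ?es)" using lv by simp
      show "distinct ?vs" using p(1) False by (simp add: is_path_def)
      show "set ?es \<subseteq> S" using p(1) g by (auto simp: is_path_def)
      fix i assume i: "i < length ?es"
      show "joins G (?es ! i) (?vs ! i) (?vs ! Suc i)"
      proof (cases "i < length es")
        case True
        then show ?thesis using p(1) lv by (auto simp: is_path_def nth_append)
      next
        case False
        then have "i = length es" using i by simp
        then show ?thesis using g lastz lv by (simp add: nth_append)
      qed
    qed
    moreover have "hd ?vs = u" using p(2) lv by simp
    moreover have "last ?vs = w" by simp
    ultimately show ?thesis by blast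
  qed
qed

lemma path_distinct_edges:
  assumes "is_path G S es vs"
  shows "distinct es"
proof -
  have L: "length vs = Suc (length es)" and D: "distinct vs"
    and J: "\<And>i. i < length es \<Longrightarrow> joins G (es ! i) (vs ! i) (vs ! Suc i)"
    using assms by (auto simp: is_path_def)
  show ?thesis
  proof (rule distinct_conv_nth[THEN iffD2], intro allI impI)
    fix i j assume ij: "i < length es" "j < length es" "i \<noteq> j"
    show "es ! i \<noteq> es ! j"
    proof
      assume eq: "es ! i = es ! j"
      have "vs ! i = vs ! j \<or> vs ! i = vs ! Suc j"
        using J[OF ij(1)] J[OF ij(2)] eq unfolding joins_def by auto
      moreover have "vs ! Suc i = vs ! j \<or> vs ! Suc i = vs ! Suc j"
        using J[OF ij(1)] J[OF ij(2)] eq unfolding joins_def by auto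
      ultimately show False
        using D ij L by (auto simp: nth_eq_iff_index_eq)
    qed
  qed
qed

lemma cycle_not_forest:
  assumes c: "is_cycle G T es vs"
  shows "\<not> forest G T"
proof -
  let ?n = "length es"
  have ne: "es \<noteq> []" and L: "length vs = ?n" and D: "distinct es" and ST: "set es \<subseteq> T"
    and J: "\<And>i. i < ?n \<Longrightarrow> joins G (es ! i) (vs ! i) (vs ! (Suc i mod ?n))"
    using c by (auto simp: is_cycle_def)
  let ?f = "es ! 0"
  have fT: "?f \<in> T" using ST ne by (simp add: subset_iff)
  show ?thesis
  proof (cases "?n = 1")
    case True
    have "joins G ?f (vs ! 0) (vs ! 0)" using J[of 0] True by simp
    then have "fst (ends G ?f) = snd (ends G ?f)" unfolding joins_def by auto
    then show ?thesis using fT unfolding forest_def by blast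
  next
    case False
    have "?n \<noteq> 0" using ne by simp
    then have n2: "?n \<ge> 2" using False by arith
    have R: "reach G (T - {?f}) (vs ! 1) (vs ! i)" if "1 \<le> i" "i < ?n" for i
      using that
    proof (induction i rule: dec_induct)
      case base
      then show ?case by simp
    next
      case (step i)
      have i: "i < ?n" "0 < i" using step by auto
      have "es ! i \<noteq> ?f" using nth_eq_iff_index_eq[OF D, of i 0] i ne by auto
      then have "es ! i \<in> T - {?f}"
        using ST i by auto
      moreover have "joins G (es ! i) (vs ! i) (vs ! Suc i)" using J[OF i(1)] step.hyps step.prems by simp
      ultimately have "reach G (T - {?f}) (vs ! i) (vs ! Suc i)" by (rule reach_step)
      then show ?case using step.IH step.prems by (auto intro: reach_trans)
    qed
    have last: "reach G (T - {?f}) (vs ! (?n - 1)) (vs ! 0)"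
    proof (rule reach_step)
      have i: "?n - 1 < ?n" "0 < ?n - 1" using n2 by auto
      have "es ! (?n - 1) \<noteq> ?f" using nth_eq_iff_index_eq[OF D, of "?n - 1" 0] i ne by auto
      then show "es ! (?n - 1) \<in> T - {?f}"
        using ST i by auto
      have "Suc (?n - 1) = ?n" using n2 by simp
      then have "Suc (?n - 1) mod ?n = 0" by simp
      then show "joins G (es ! (?n - 1)) (vs ! (?n - 1)) (vs ! 0)" using J[OF i(1)] by simp
    qed
    have "reach G (T - {?f}) (vs ! 1) (vs ! 0)"
    proof -
      have "reach G (T - {?f}) (vs ! 1) (vs ! (?n - 1))" using R[of "?n - 1"] n2 by simp
      then show ?thesis using last by (rule reach_trans)
    qed
    then have "reach G (T - {?f}) (vs ! 0) (vs ! 1)" by (rule reach_sym)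
    moreover have "joins G ?f (vs ! 0) (vs ! 1)" using J[of 0] n2 ne by simp
    ultimately have "reach G (T - {?f}) (fst (ends G ?f)) (snd (ends G ?f))"
      by (intro reach_joins_ends)
    then show ?thesis using fT unfolding forest_def by blast
  qed
qed

lemma not_forest_cycle:
  assumes "\<not> forest G T"
  shows "\<exists>es vs. is_cycle G T es vs"
proof -
  obtain f where fT: "f \<in> T" and nf: "fst (ends G f) = snd (ends G f) \<or>
      reach G (T - {f}) (fst (ends G f)) (snd (ends G f))"
    using assms unfolding forest_def by blast
  obtain a b where ab: "ends G f = (a, b)" by (cases "ends G f")
  show ?thesis
  proof (cases "a = b")
    case True
    have "is_cycle G T [f] [a]"
      using fT ab True by (simp add: is_cycle_def joins_def)
    then show ?thesis by blast
  next
    case False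
    then have "reach G (T - {f}) b a" using nf ab by (auto intro: reach_sym)
    from simple_path_exists[OF this] obtain es vs
      where p: "is_path G (T - {f}) es vs" "hd vs = b" "last vs = a" by blast
    have L: "length vs = Suc (length es)" and ne: "vs \<noteq> []" and D: "distinct vs"
      and S: "set es \<subseteq> T - {f}"
      and J: "\<And>i. i < length es \<Longrightarrow> joins G (es ! i) (vs ! i) (vs ! Suc i)"
      using p(1) by (auto simp: is_path_def)
    have DE: "distinct es" by (rule path_distinct_edges[OF p(1)])
    have v0: "vs ! 0 = b" using p(2) ne by (simp add: hd_conv_nth)
    have vl: "vs ! length es = a" using p(3) ne L by (simp add: last_conv_nth)
    have "is_cycle G T (es @ [f]) vs"
      unfolding is_cycle_def
    proof (intro conjI allI impI)
      show "es @ [f] \<noteq> []" by simp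
      show "length vs = length (es @ [f])" using L by simp
      show "distinct (es @ [f])" using DE S by auto
      show "distinct vs" by (rule D)
      show "set (es @ [f]) \<subseteq> T" using S fT by auto
      fix i assume i: "i < length (es @ [f])"
      show "joins G ((es @ [f]) ! i) (vs ! i) (vs ! (Suc i mod length (es @ [f])))"
      proof (cases "i < length es")
        case True
        then show ?thesis using J[OF True] by (simp add: nth_append)
      next
        case False
        then have ie: "i = length es" using i by simp
        then show ?thesis using v0 vl ab by (simp add: nth_append joins_def)
      qed
    qed
    then show ?thesis by blast
  qed
qed

lemma spanning_tree_char:
  "spanning_tree G T \<longleftrightarrow> T \<subseteq> edges G \<and> connected_by G T \<and> forest G T"
  unfolding spanning_tree_def using cycle_not_forest not_forest_cycle by blast

definition delE :: "('v,'e) mgraph \<Rightarrow> 'e \<Rightarrow> ('v,'e) mgraph" where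
  "delE G e = (verts G, edges G - {e}, ends G)"

lemma delE_simps [simp]:
  "verts (delE G e) = verts G" "edges (delE G e) = edges G - {e}" "ends (delE G e) = ends G"
  by (simp_all add: delE_def verts_def edges_def ends_def)

lemma identify_simps [simp]:
  "verts (identify x y G) = merge x y ` verts G" "edges (identify x y G) = edges G"
  "ends (identify x y G) = (\<lambda>e. map_prod (merge x y) (merge x y) (ends G e))"
  by (simp_all add: identify_def verts_def edges_def ends_def)

lemma wf_delE: "wf_mgraph G \<Longrightarrow> wf_mgraph (delE G e)"
  unfolding wf_mgraph_def by auto

lemma wf_identify: "wf_mgraph G \<Longrightarrow> wf_mgraph (identify x y G)"
  unfolding wf_mgraph_def by (auto simp: map_prod_def split_beta)

lemma merge_x [simp]: "merge x y x = x" and merge_y [simp]: "merge x y y = x"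
  by (auto simp: merge_def)

lemma merge_eq_cases: "merge x y u = merge x y w \<Longrightarrow> u = w \<or> (u = x \<and> w = y) \<or> (u = y \<and> w = x)"
  by (auto simp: merge_def split: if_splits)

lemma verts_identify_eq:
  assumes "x \<in> V" "x \<noteq> y"
  shows "merge x y ` V = V - {y}"
  using assms by (auto simp: merge_def image_iff)

lemma joins_delE [simp]: "joins (delE G e) = joins G"
  by (simp add: joins_def[abs_def])

lemma reach_delE [simp]: "reach (delE G e) = reach G"
  by (simp add: reach_def[abs_def])

lemma forest_delE [simp]: "forest (delE G e) = forest G"
  by (simp add: forest_def[abs_def])

lemma connected_by_delE [simp]: "connected_by (delE G e) T = connected_by G T"
  by (simp add: connected_by_reach)

lemma spanning_tree_delE: "spanning_tree (delE G e) T \<longleftrightarrow> spanning_tree G T \<and> e \<notin> T"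
  by (auto simp: spanning_tree_char)

lemma joins_identify: "joins G g u w \<Longrightarrow> joins (identify x y G) g (merge x y u) (merge x y w)"
  unfolding joins_def by auto

lemma reach_identify_down:
  assumes "reach G (insert e S) a b" and e: "joins G e x y"
  shows "reach (identify x y G) S (merge x y a) (merge x y b)"
  using assms(1) unfolding reach_def[of G]
proof (induction rule: rtranclp_induct)
  case base
  then show ?case by simp
next
  case (step c d)
  from step.hyps(2) obtain g where g: "g \<in> insert e S" "joins G g c d" by blast
  show ?case
  proof (cases "g = e")
    case True
    then have "merge x y c = merge x y d"
      using g(2) e unfolding joins_def by (auto simp: merge_def)
    then show ?thesis using step.IH by simp
  next
    case False
    then have "g \<in> S" using g(1) by simp
    then have "reach (identify x y G) S (merge x y c) (merge x y d)"
      using joins_identify[OF g(2)] by (rule reach_step)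
    then show ?thesis by (rule reach_trans[OF step.IH])
  qed
qed

lemma merge_eq_reach:
  assumes "merge x y u = merge x y w" and e: "e \<in> T" "joins G e x y"
  shows "reach G T u w"
proof -
  have xy: "reach G T x y" using e by (rule reach_step)
  then show ?thesis using merge_eq_cases[OF assms(1)] reach_sym[OF xy] by auto
qed

lemma reach_identify_up:
  assumes "reach (identify x y G) S a' b'" and e: "joins G e x y"
  shows "\<And>a b. merge x y a = a' \<Longrightarrow> merge x y b = b' \<Longrightarrow> reach G (insert e S) a b"
  using assms(1) unfolding reach_def[of "identify x y G"]
proof (induction rule: rtranclp_induct)
  case base
  then show ?case using merge_eq_reach[of x y a b e "insert e S"] e by simp
next
  case (step c' d')
  from step.hyps(2) obtain g where g: "g \<in> S" "joins (identify x y G) g c' d'" by blast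
  obtain u w where uw: "ends G g = (u, w)" by (cases "ends G g")
  have "(merge x y u = c' \<and> merge x y w = d') \<or> (merge x y u = d' \<and> merge x y w = c')"
    using g(2) uw unfolding joins_def by auto
  then obtain u0 w0 where u0: "merge x y u0 = c'" "merge x y w0 = d'" "joins G g u0 w0"
    using uw unfolding joins_def by auto
  have "reach G (insert e S) a u0" using step.IH[OF step.prems(1) u0(1)] .
  moreover have "reach G (insert e S) u0 w0" using u0(3) g(1) by (intro reach_step[of g]) auto
  moreover have "reach G (insert e S) w0 b"
    using merge_eq_reach[of x y w0 b e "insert e S"] e u0(2) step.prems(2) by simp
  ultimately show ?case by (blast intro: reach_trans)
qed

lemma reach_identify_iff:
  assumes e: "joins G e x y"
  shows "reach (identify x y G) S (merge x y a) (merge x y b) \<longleftrightarrow> reach G (insert e S) a b"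
  using reach_identify_up[OF _ e] reach_identify_down[OF _ e] by blast

lemma connected_identify_iff:
  assumes e: "joins G e x y"
  shows "connected_by (identify x y G) S \<longleftrightarrow> connected_by G (insert e S)"
  unfolding connected_by_reach using reach_identify_iff[OF e] by auto

lemma reach_split:
  assumes "reach G (insert g S) u z" and ab: "ends G g = (a, b)"
  shows "reach G S u z \<or> (reach G S u a \<and> reach G S b z) \<or> (reach G S u b \<and> reach G S a z)"
  using assms(1) unfolding reach_def[of G "insert g S"]
proof (induction rule: rtranclp_induct)
  case base
  then show ?case by simp
next
  case (step c d)
  from step.hyps(2) obtain h where h: "h \<in> insert g S" "joins G h c d" by blast
  show ?case
  proof (cases "h = g")
    case True
    then have cd: "(c = a \<and> d = b) \<or> (c = b \<and> d = a)" using h(2) ab unfolding joins_def by auto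
    then show ?thesis using step.IH by auto
  next
    case False
    then have hS: "h \<in> S" using h(1) by simp
    have "reach G S c d" using hS h(2) by (rule reach_step)
    then show ?thesis using step.IH by (blast intro: reach_trans)
  qed
qed

lemma reach_cycle_claim:
  assumes fin: "finite S" and r: "reach G S x y" and xy: "x \<noteq> y" and e: "joins G e x y"
  shows "\<exists>f\<in>S. reach G (insert e (S - {f})) (fst (ends G f)) (snd (ends G f))"
  using fin r
proof (induction S rule: finite_induct)
  case empty
  have "x = y" using empty unfolding reach_def by (auto elim: rtranclp.cases)
  then show ?case using xy by simp
next
  case (insert g S0)
  show ?case
  proof (cases "reach G S0 x y")
    case True
    then obtain f where f: "f \<in> S0" "reach G (insert e (S0 - {f})) (fst (ends G f)) (snd (ends G f))"
      using insert.IH by blast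
    have "insert e (S0 - {f}) \<subseteq> insert e (insert g S0 - {f})" by blast
    with f(2) have "reach G (insert e (insert g S0 - {f})) (fst (ends G f)) (snd (ends G f))"
      by (rule reach_mono)
    then show ?thesis using f(1) by blast
  next
    case False
    obtain a b where ab: "ends G g = (a, b)" by (cases "ends G g")
    have D: "(reach G S0 x a \<and> reach G S0 b y) \<or> (reach G S0 x b \<and> reach G S0 a y)"
      using reach_split[OF insert.prems ab] False by blast
    have exy: "reach G (insert e S0) x y" using e by (intro reach_step[of e]) auto
    have "reach G (insert e S0) a b"
      using D
    proof
      assume h: "reach G S0 x a \<and> reach G S0 b y"
      have sub: "S0 \<subseteq> insert e S0" by blast
      have 1: "reach G (insert e S0) a x" using reach_mono[OF conjunct1[OF h] sub] by (rule reach_sym)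
      have 2: "reach G (insert e S0) y b" using reach_mono[OF conjunct2[OF h] sub] by (rule reach_sym)
      show ?thesis by (rule reach_trans[OF reach_trans[OF 1 exy] 2])
    next
      assume h: "reach G S0 x b \<and> reach G S0 a y"
      have sub: "S0 \<subseteq> insert e S0" by blast
      have 1: "reach G (insert e S0) a y" using reach_mono[OF conjunct2[OF h] sub] .
      have 2: "reach G (insert e S0) x b" using reach_mono[OF conjunct1[OF h] sub] .
      show ?thesis by (rule reach_trans[OF reach_trans[OF 1 reach_sym[OF exy]] 2])
    qed
    moreover have "insert g S0 - {g} = S0" using insert.hyps(2) by blast
    ultimately show ?thesis using ab by auto
  qed
qed

context
  fixes G :: "('v,'e) mgraph" and e x y
  assumes wf: "wf_mgraph G" and eE: "e \<in> edges G" and exy: "ends G e = (x, y)" and xy: "x \<noteq> y"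
begin

private lemma ejoin: "joins G e x y" using exy by (simp add: joins_def)

private lemma xV: "x \<in> verts G" and yV: "y \<in> verts G"
  using wf eE exy unfolding wf_mgraph_def by force+

private abbreviation "H \<equiv> identify x y G"

lemma e_loop_H: "fst (ends H e) = snd (ends H e)"
  using exy xy by simp

lemma forest_insert_iff:
  assumes eT: "e \<notin> T"
  shows "forest G (insert e T) \<longleftrightarrow> \<not> reach G T x y \<and> forest H T"
proof -
  have A: "(fst (ends G f) \<noteq> snd (ends G f) \<and> \<not> reach G (insert e (T - {f})) (fst (ends G f)) (snd (ends G f)))
      \<longleftrightarrow> (fst (ends H f) \<noteq> snd (ends H f) \<and> \<not> reach H (T - {f}) (fst (ends H f)) (snd (ends H f)))"
    for f
  proof -
    obtain a b where ab: "ends G f = (a, b)" by (cases "ends G f")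
    have R: "reach H (T - {f}) (merge x y a) (merge x y b) \<longleftrightarrow> reach G (insert e (T - {f})) a b"
      by (rule reach_identify_iff[OF ejoin])
    have M: "merge x y a = merge x y b \<Longrightarrow> a \<noteq> b \<Longrightarrow> reach G (insert e (T - {f})) a b"
      using merge_eq_reach[of x y a b e "insert e (T - {f})"] ejoin by simp
    show ?thesis using ab R M by (auto simp: map_prod_def)
  qed
  have B: "insert e T - {f} = insert e (T - {f})" if "f \<in> T" for f using that eT by blast
  have C: "insert e T - {e} = T" using eT by blast
  have "forest G (insert e T) \<longleftrightarrow> (\<not> reach G T x y) \<and>
      (\<forall>f\<in>T. fst (ends G f) \<noteq> snd (ends G f) \<and> \<not> reach G (insert e (T - {f})) (fst (ends G f)) (snd (ends G f)))"
    unfolding forest_def using exy xy eT B C by auto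
  also have "\<dots> \<longleftrightarrow> \<not> reach G T x y \<and> forest H T"
    unfolding forest_def[of H] using A by blast
  finally show ?thesis .
qed

lemma st_insert_iff:
  assumes eT: "e \<notin> T"
  shows "spanning_tree G (insert e T) \<longleftrightarrow> spanning_tree H T"
proof
  assume st: "spanning_tree G (insert e T)"
  then show "spanning_tree H T"
    using forest_insert_iff[OF eT] connected_identify_iff[OF ejoin, of T]
    by (auto simp: spanning_tree_char)
next
  assume st: "spanning_tree H T"
  then have TE: "T \<subseteq> edges G" and c: "connected_by H T" and f: "forest H T"
    by (auto simp: spanning_tree_char)
  have "\<not> reach G T x y"
  proof
    assume r: "reach G T x y"
    have fin: "finite T" using TE wf finite_subset unfolding wf_mgraph_def by blast
    obtain f where fT: "f \<in> T" and rf: "reach G (insert e (T - {f})) (fst (ends G f)) (snd (ends G f))"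
      using reach_cycle_claim[OF fin r xy ejoin] by blast
    have "reach H (T - {f}) (fst (ends H f)) (snd (ends H f))"
      using rf reach_identify_iff[OF ejoin, of "T - {f}" "fst (ends G f)" "snd (ends G f)"]
      by (simp add: map_prod_def split_beta)
    then show False using f fT unfolding forest_def by blast
  qed
  then show "spanning_tree G (insert e T)"
    using forest_insert_iff[OF eT] f c connected_identify_iff[OF ejoin, of T] TE eE
    by (auto simp: spanning_tree_char)
qed

lemma st_H_no_e: "spanning_tree H T \<Longrightarrow> e \<notin> T"
  using e_loop_H unfolding spanning_tree_char forest_def by blast

lemma finite_trees: "finite {T. spanning_tree G' T}" if "wf_mgraph G'" for G' :: "('v,'e) mgraph"
proof -
  have "{T. spanning_tree G' T} \<subseteq> Pow (edges G')" by (auto simp: spanning_tree_def)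
  moreover have "finite (Pow (edges G'))" using that unfolding wf_mgraph_def by simp
  ultimately show ?thesis by (rule finite_subset)
qed

lemma deletion_contraction: "ntrees G = ntrees (delE G e) + ntrees H"
proof -
  let ?A = "{T. spanning_tree G T \<and> e \<notin> T}" and ?B = "{T. spanning_tree G T \<and> e \<in> T}"
  have U: "{T. spanning_tree G T} = ?A \<union> ?B" by blast
  have fA: "finite ?A" and fB: "finite ?B" using finite_trees[OF wf] by (auto intro: finite_subset)
  have A: "?A = {T. spanning_tree (delE G e) T}" by (auto simp: spanning_tree_delE)
  have B: "?B = insert e ` {T. spanning_tree H T}"
  proof
    show "?B \<subseteq> insert e ` {T. spanning_tree H T}"
    proof
      fix T assume T: "T \<in> ?B"
      then have "T = insert e (T - {e})" by blast
      moreover have "spanning_tree H (T - {e})"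
        using T st_insert_iff[of "T - {e}"] by (simp add: insert_absorb)
      ultimately show "T \<in> insert e ` {T. spanning_tree H T}" by blast
    qed
  next
    show "insert e ` {T. spanning_tree H T} \<subseteq> ?B"
      using st_insert_iff st_H_no_e by blast
  qed
  have inj: "inj_on (insert e) {T. spanning_tree H T}"
    using st_H_no_e unfolding inj_on_def by (metis Diff_insert_absorb mem_Collect_eq)
  have "ntrees G = card ?A + card ?B"
    unfolding ntrees_def U by (rule card_Un_disjoint[OF fA fB]) blast
  also have "card ?B = ntrees H" unfolding B ntrees_def by (rule card_image[OF inj])
  also have "card ?A = ntrees (delE G e)" unfolding A ntrees_def ..
  finally show ?thesis .
qed

end

lemma loop_deletion:
  assumes "fst (ends G e) = snd (ends G e)"
  shows "ntrees G = ntrees (delE G e)"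
proof -
  have "{T. spanning_tree G T} = {T. spanning_tree (delE G e) T}"
    using assms by (auto simp: spanning_tree_delE spanning_tree_char forest_def)
  then show ?thesis unfolding ntrees_def by simp
qed

lemma reach_from_isolated:
  assumes "reach G T r z" and "T \<subseteq> edges G"
    and iso: "\<And>f v. f \<in> edges G \<Longrightarrow> joins G f r v \<Longrightarrow> v = r"
  shows "z = r"
  using assms(1) unfolding reach_def
proof (induction rule: rtranclp_induct)
  case base
  then show ?case by simp
next
  case (step c d)
  then obtain f where "f \<in> T" "joins G f c d" by blast
  then show ?case using step.IH iso assms(2) by blast
qed

lemma ntrees_isolated:
  assumes r: "r \<in> verts G" and w: "w \<in> verts G" "w \<noteq> r"
    and iso: "\<And>f v. f \<in> edges G \<Longrightarrow> joins G f r v \<Longrightarrow> v = r"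
  shows "ntrees G = 0"
proof -
  have E: "{T. spanning_tree G T} = {}"
  proof (rule ccontr)
    assume "{T. spanning_tree G T} \<noteq> {}"
    then obtain T where T: "spanning_tree G T" by blast
    then have TE: "T \<subseteq> edges G" and c: "connected_by G T" by (auto simp: spanning_tree_char)
    have "reach G T r w" using c r w(1) unfolding connected_by_reach by blast
    then have "w = r" by (rule reach_from_isolated[OF _ TE iso])
    then show False using w by simp
  qed
  show ?thesis unfolding ntrees_def E by simp
qed

lemma ntrees_single:
  assumes wf: "wf_mgraph G" and V: "verts G = {r}"
  shows "ntrees G = 1"
proof -
  have "spanning_tree G T \<longleftrightarrow> T = {}" for T
  proof
    assume T: "spanning_tree G T"
    show "T = {}"
    proof (rule ccontr)
      assume "T \<noteq> {}"
      then obtain f where f: "f \<in> T" by blast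
      then have "f \<in> edges G" using T by (auto simp: spanning_tree_def)
      then have "fst (ends G f) = r" "snd (ends G f) = r" using wf V unfolding wf_mgraph_def by auto
      moreover have "forest G T" using T by (simp add: spanning_tree_char)
      ultimately show False using f unfolding forest_def by auto
    qed
  next
    assume "T = {}"
    then show "spanning_tree G T" using V by (auto simp: spanning_tree_char forest_def connected_by_reach)
  qed
  then have "{T. spanning_tree G T} = {{}}" by blast
  then show ?thesis unfolding ntrees_def by simp
qed

lemma reach_nonloop:
  assumes "reach G S a b" "a \<noteq> b"
  shows "\<exists>f\<in>S. fst (ends G f) \<noteq> snd (ends G f)"
  using assms unfolding reach_def
proof (induction rule: rtranclp_induct)
  case base
  then show ?case by simp
next
  case (step c d)
  then obtain f where f: "f \<in> S" "joins G f c d" by blast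
  show ?case
  proof (cases "c = d")
    case True
    then show ?thesis using step by simp
  next
    case False
    have "fst (ends G f) \<noteq> snd (ends G f)" using f(2) False unfolding joins_def by auto
    then show ?thesis using f(1) by blast
  qed
qed

lemma ntrees_pos:
  assumes "wf_mgraph G" "connected_mgraph G"
  shows "ntrees G > 0"
proof -
  have "\<forall>G :: ('v,'e) mgraph. wf_mgraph G \<longrightarrow> connected_mgraph G \<longrightarrow> card (verts G) = n \<longrightarrow> ntrees G > 0" for n
  proof (induction n rule: less_induct)
    case (less n)
    show ?case
    proof (intro allI impI)
      fix G :: "('v,'e) mgraph"
      assume wf: "wf_mgraph G" and c: "connected_mgraph G" and n: "card (verts G) = n"
      obtain r where r: "r \<in> verts G" using c unfolding connected_mgraph_def by blast
      show "ntrees G > 0"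
      proof (cases "verts G = {r}")
        case True
        then show ?thesis using ntrees_single[OF wf True] by simp
      next
        case False
        then obtain w where w: "w \<in> verts G" "w \<noteq> r" using r by blast
        have "reach G (edges G) r w" using c r w unfolding connected_mgraph_def connected_by_reach by blast
        then obtain e where eE: "e \<in> edges G" and nl: "fst (ends G e) \<noteq> snd (ends G e)"
          using reach_nonloop w(2) by metis
        obtain x y where exy: "ends G e = (x, y)" by (cases "ends G e")
        have xy: "x \<noteq> y" using nl exy by simp
        have xV: "x \<in> verts G" and yV: "y \<in> verts G" using wf eE exy unfolding wf_mgraph_def by force+
        let ?H = "identify x y G"
        have wfH: "wf_mgraph ?H" by (rule wf_identify[OF wf])
        have VH: "verts ?H = verts G - {y}" using verts_identify_eq[OF xV xy] by simp
        have cH: "connected_mgraph ?H"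
        proof -
          have j: "joins G e x y" using exy by (simp add: joins_def)
          have "connected_by G (insert e (edges G))" using c eE unfolding connected_mgraph_def
            by (simp add: insert_absorb)
          then have "connected_by ?H (edges G)" using connected_identify_iff[OF j] by simp
          moreover have "verts ?H \<noteq> {}" using VH xV xy by blast
          ultimately show ?thesis unfolding connected_mgraph_def by simp
        qed
        have fin: "finite (verts G)" using wf unfolding wf_mgraph_def by simp
        have "card (verts G - {y}) < card (verts G)" by (rule card_Diff1_less[OF fin yV])
        then have "card (verts ?H) < n" using VH n by simp
        then have "ntrees ?H > 0" using less.IH wfH cH by blast
        then obtain T where T: "spanning_tree ?H T" unfolding ntrees_def
          by (metis (mono_tags, lifting) card.empty empty_Collect_eq less_irrefl)
        have "spanning_tree G (insert e T)"
          using st_insert_iff[OF wf eE exy xy] st_H_no_e[OF wf eE exy xy T] T by blast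
        then have "{T. spanning_tree G T} \<noteq> {}" by blast
        then show ?thesis unfolding ntrees_def using finite_trees[OF wf eE exy xy wf] by (simp add: card_gt_0_iff)
      qed
    qed
  qed
  then show ?thesis using assms by blast
qed

definition inc :: "('v,'e) mgraph \<Rightarrow> 'e \<Rightarrow> 'v \<Rightarrow> real" where
  "inc G e i = (if fst (ends G e) = i then 1 else 0) - (if snd (ends G e) = i then 1 else 0)"

definition Lap :: "('v,'e) mgraph \<Rightarrow> 'v \<Rightarrow> 'v \<Rightarrow> real" where
  "Lap G = (\<lambda>i j. \<Sum>e\<in>edges G. inc G e i * inc G e j)"

lemma Lap_sym: "Lap G i j = Lap G j i"
  unfolding Lap_def by (simp add: mult.commute)

lemma inc_identify:
  assumes "i \<noteq> y"
  shows "inc (identify x y G) e i = inc G e i + (if i = x then inc G e y else 0)"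
proof -
  obtain u w where uw: "ends G e = (u, w)" by (cases "ends G e")
  show ?thesis using assms uw by (auto simp: inc_def merge_def)
qed

lemma Lap_identify:
  assumes "i \<noteq> y" "j \<noteq> y"
  shows "Lap (identify x y G) i j = mergeM x y (Lap G) i j"
proof -
  have "Lap (identify x y G) i j = (\<Sum>e\<in>edges G. (inc G e i + (if i = x then inc G e y else 0)) * (inc G e j + (if j = x then inc G e y else 0)))"
    unfolding Lap_def using assms by (simp add: inc_identify)
  also have "\<dots> = mergeM x y (Lap G) i j"
    unfolding mergeM_def Lap_def
    by (cases "i = x"; cases "j = x") (simp_all add: sum.distrib algebra_simps sum_distrib_left)
  finally show ?thesis .
qed

lemma Lap_identify_off:
  assumes "i \<noteq> y" "j \<noteq> y" "i \<noteq> x" "j \<noteq> x"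
  shows "Lap (identify x y G) i j = Lap G i j"
  using Lap_identify[OF assms(1,2), of x G] assms(3,4) by (simp add: mergeM_def)

lemma Lap_delE:
  assumes "e \<in> edges G" "finite (edges G)"
  shows "Lap G i j = Lap (delE G e) i j + inc G e i * inc G e j"
  unfolding Lap_def inc_def using assms by (simp add: sum.remove)

lemma inc_sum:
  assumes "wf_mgraph G" "e \<in> edges G"
  shows "(\<Sum>j\<in>verts G. inc G e j) = 0"
proof -
  have "fst (ends G e) \<in> verts G" "snd (ends G e) \<in> verts G" "finite (verts G)"
    using assms unfolding wf_mgraph_def by auto
  then show ?thesis unfolding inc_def by (simp add: sum_subtractf sum.delta)
qed

lemma Lap_rowsum:
  assumes "wf_mgraph G"
  shows "(\<Sum>j\<in>verts G. Lap G i j) = 0"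
proof -
  have "(\<Sum>j\<in>verts G. Lap G i j) = (\<Sum>e\<in>edges G. inc G e i * (\<Sum>j\<in>verts G. inc G e j))"
    unfolding Lap_def by (simp add: sum_distrib_left sum.swap[of _ "verts G"])
  also have "\<dots> = 0" using inc_sum[OF assms] by simp
  finally show ?thesis .
qed

lemma identify_delE: "identify x y (delE G e) = delE (identify x y G) e"
  by (simp add: delE_def identify_def verts_def edges_def ends_def)

lemma matrix_tree:
  assumes "wf_mgraph G" "r \<in> verts G"
  shows "real (ntrees G) = detS (verts G - {r}) (Lap G)"
proof -
  have "\<forall>G :: ('v,'e) mgraph. \<forall>r. wf_mgraph G \<longrightarrow> r \<in> verts G \<longrightarrow> card (edges G) = n \<longrightarrow>
          real (ntrees G) = detS (verts G - {r}) (Lap G)" for n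
  proof (induction n rule: less_induct)
    case (less n)
    show ?case
    proof (intro allI impI)
      fix G :: "('v,'e) mgraph" and r
      assume wf: "wf_mgraph G" and r: "r \<in> verts G" and n: "card (edges G) = n"
      have finV: "finite (verts G)" and finE: "finite (edges G)" using wf unfolding wf_mgraph_def by auto
      show "real (ntrees G) = detS (verts G - {r}) (Lap G)"
      proof (cases "\<exists>e\<in>edges G. \<exists>v. v \<noteq> r \<and> joins G e r v")
        case True
        then obtain e v where eE: "e \<in> edges G" and vr: "v \<noteq> r" and j: "joins G e r v" by blast
        obtain x y where exy: "ends G e = (x, y)" by (cases "ends G e")
        have xy: "x \<noteq> y" and xyrv: "(x = r \<and> y = v) \<or> (x = v \<and> y = r)"
          using j exy vr unfolding joins_def by auto
        have xV: "x \<in> verts G" and yV: "y \<in> verts G" using wf eE exy unfolding wf_mgraph_def by force+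
        have vV: "v \<in> verts G" using xyrv xV yV by auto
        let ?G' = "delE G e"
        let ?H = "identify x y ?G'"
        have wf': "wf_mgraph ?G'" by (rule wf_delE[OF wf])
        have wfH: "wf_mgraph ?H" by (rule wf_identify[OF wf'])
        have "card (edges G - {e}) < card (edges G)" by (rule card_Diff1_less[OF finE eE])
        then have cE: "card (edges ?G') < n" using n by simp
        have cH: "card (edges ?H) < n" using cE by simp
        have VH: "verts ?H = verts G - {y}" using verts_identify_eq[OF xV xy] by simp
        have xH: "x \<in> verts ?H" using VH xV xy by simp
        have IH1: "real (ntrees ?G') = detS (verts G - {r}) (Lap ?G')"
          using less.IH[OF cE, rule_format, of ?G' r] wf' r by simp
        have IH2: "real (ntrees ?H) = detS (verts ?H - {x}) (Lap ?H)"
          using less.IH[OF cH, rule_format, of ?H x] wfH xH by simp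
        have HD: "detS (verts ?H - {x}) (Lap ?H) = detS (verts G - {r} - {v}) (Lap ?G')"
        proof -
          have SE: "verts ?H - {x} = verts G - {r} - {v}" using VH xyrv by auto
          have LE: "Lap ?H i j = Lap ?G' i j" if "i \<in> verts G - {r} - {v}" "j \<in> verts G - {r} - {v}" for i j
            using that xyrv by (intro Lap_identify_off) auto
          show ?thesis unfolding SE by (rule detS_cong) (rule LE)
        qed
        have T: "real (ntrees G) = real (ntrees ?G') + real (ntrees ?H)"
        proof -
          have "ntrees G = ntrees ?G' + ntrees (identify x y G)"
            by (rule deletion_contraction[OF wf eE exy xy])
          moreover have "ntrees (identify x y G) = ntrees (delE (identify x y G) e)"
            by (rule loop_deletion) (use exy xy in simp)
          ultimately show ?thesis by (simp add: identify_delE)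
        qed
        let ?W = "verts G - {r}"
        have vW: "v \<in> ?W" using vV vr by simp
        have incv: "inc G e i * inc G e j = (if i = v \<and> j = v then 1 else 0)" if "i \<in> ?W" "j \<in> ?W" for i j
          using that xyrv exy by (auto simp: inc_def)
        have D: "detS ?W (Lap G) = detS ?W (Lap ?G') + detS (?W - {v}) (Lap ?G')"
        proof -
          have "detS ?W (Lap G) = detS ?W (rowupd (Lap ?G') v (\<lambda>j. 1 * Lap ?G' v j + 1 * unitv v j))"
            by (rule detS_cong) (auto simp: rowupd_def unitv_def Lap_delE[OF eE finE] incv)
          also have "\<dots> = detS ?W (rowupd (Lap ?G') v (Lap ?G' v)) + detS ?W (rowupd (Lap ?G') v (unitv v))"
            using detS_row_add[of ?W v "Lap ?G'" 1 "Lap ?G' v" 1 "unitv v"] finV vW by simp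
          also have "rowupd (Lap ?G') v (Lap ?G' v) = Lap ?G'" by (rule rowupd_same)
          also have "detS ?W (rowupd (Lap ?G') v (unitv v)) = detS (?W - {v}) (rowupd (Lap ?G') v (unitv v))"
            by (rule detS_unit_row) (use finV vW in \<open>auto simp: rowupd_def unitv_def\<close>)
          also have "\<dots> = detS (?W - {v}) (Lap ?G')" by (rule detS_cong) (auto simp: rowupd_def)
          finally show ?thesis .
        qed
        show ?thesis unfolding T IH1 IH2 D HD ..
      next
        case False
        then have iso: "\<And>f v. f \<in> edges G \<Longrightarrow> joins G f r v \<Longrightarrow> v = r" by blast
        show ?thesis
        proof (cases "verts G = {r}")
          case True
          then show ?thesis using ntrees_single[OF wf True] by simp
        next
          case False
          then obtain w where w: "w \<in> verts G" "w \<noteq> r" using r by blast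
          have "ntrees G = 0" by (rule ntrees_isolated[OF r w iso])
          moreover have "detS (verts G - {r}) (Lap G) = 0"
          proof (rule detS_zero_rowsum)
            show "finite (verts G - {r})" using finV by simp
            show "verts G - {r} \<noteq> {}" using w by blast
            fix i assume i: "i \<in> verts G - {r}"
            have incr: "inc G f r = 0" if "f \<in> edges G" for f
            proof -
              obtain a b where ab: "ends G f = (a, b)" by (cases "ends G f")
              have "a = r \<Longrightarrow> b = r" using iso[OF that, of b] ab by (simp add: joins_def)
              moreover have "b = r \<Longrightarrow> a = r" using iso[OF that, of a] ab by (simp add: joins_def)
              ultimately show ?thesis using ab by (auto simp: inc_def)
            qed
            have "Lap G i r = 0" unfolding Lap_def using incr by simp
            moreover have "(\<Sum>j\<in>verts G. Lap G i j) = Lap G i r + (\<Sum>j\<in>verts G - {r}. Lap G i j)"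
              using finV r by (simp add: sum.remove)
            ultimately show "(\<Sum>j\<in>verts G - {r}. Lap G i j) = 0" using Lap_rowsum[OF wf, of i] by simp
          qed
          ultimately show ?thesis by simp
        qed
      qed
    qed
  qed
  then show ?thesis using assms by meson
qed

lemma adjS_diag:
  assumes "finite S" "y \<in> S"
  shows "adjS S X y y = detS (S - {y}) X"
proof -
  have "adjS S X y y = detS (S - {y}) (rowupd X y (unitv y))"
    unfolding adjS_def by (rule detS_unit_row[OF assms]) (auto simp: rowupd_def unitv_def)
  also have "\<dots> = detS (S - {y}) X" by (rule detS_cong) (auto simp: rowupd_def)
  finally show ?thesis .
qed

lemma mergeM_sym:
  assumes "\<And>i j. X i j = X j i"
  shows "mergeM a b X i j = mergeM a b X j i"
  unfolding mergeM_def using assms by auto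

lemma row_trick:
  assumes fin: "finite S" and st: "s \<in> S" "t \<in> S" "s \<noteq> t" and q: "q \<in> S" "q \<noteq> s" "q \<noteq> t"
  shows "adjS S (mergeM s t X) q q = adjS S X q q"
    and "adjS S (mergeM s t X) t q = adjS S X t q - adjS S X s q"
proof -
  have gen: "adjS S (mergeM s t X) x q = detS S (rowupd X q w)"
    if w: "\<And>j. w j + (if j = s then w t else 0) = unitv x j" for x w
  proof -
    have "adjS S (mergeM s t X) x q = detS S (mergeM s t (rowupd X q w))"
      unfolding adjS_def
    proof (rule detS_cong)
      fix i j assume "i \<in> S" "j \<in> S"
      show "rowupd (mergeM s t X) q (unitv x) i j = mergeM s t (rowupd X q w) i j"
      proof (cases "i = q")
        case True
        then show ?thesis using q w[of j] by (cases "j = s") (simp_all add: rowupd_def mergeM_def)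
      next
        case False
        then show ?thesis using q by (simp add: rowupd_def mergeM_def)
      qed
    qed
    also have "\<dots> = detS S (rowupd X q w)" by (rule detS_mergeM_full[OF fin st])
    finally show ?thesis .
  qed
  show "adjS S (mergeM s t X) q q = adjS S X q q"
    unfolding adjS_def[of S X] by (rule gen) (use q in \<open>auto simp: unitv_def\<close>)
  have "adjS S (mergeM s t X) t q = detS S (rowupd X q (\<lambda>j. 1 * unitv t j + (-1) * unitv s j))"
    by (rule gen) (use st in \<open>auto simp: unitv_def\<close>)
  also have "\<dots> = adjS S X t q - adjS S X s q"
    unfolding adjS_def using detS_row_add[OF fin q(1), of X 1 "unitv t" "-1" "unitv s"] by simp
  finally show "adjS S (mergeM s t X) t q = adjS S X t q - adjS S X s q" .
qed

locale rooted =
  fixes G :: "('v,'e) mgraph" and p :: 'v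
  assumes wf: "wf_mgraph G" and pV: "p \<in> verts G" and pos: "ntrees G > 0"
begin

abbreviation "V \<equiv> verts G"
abbreviation "W \<equiv> verts G - {p}"
abbreviation "L \<equiv> Lap G"

definition K :: "'v \<Rightarrow> 'v \<Rightarrow> real" where
  "K x y = (if x = p \<or> y = p then 0 else adjS W L x y)"

lemma finV: "finite V" using wf unfolding wf_mgraph_def by simp
lemma finW: "finite W" using finV by simp

lemma D_eq: "real (ntrees G) = detS W L" by (rule matrix_tree[OF wf pV])
lemma D_nz: "detS W L \<noteq> 0" using D_eq pos by simp

lemma L_sym: "L i j = L j i" by (rule Lap_sym)

lemma K_sym: "x \<in> V \<Longrightarrow> y \<in> V \<Longrightarrow> K x y = K y x"
  unfolding K_def using adjS_sym[OF finW, of x y L, OF _ _ L_sym] by auto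

lemma K_p1 [simp]: "K p y = 0" and K_p2 [simp]: "K x p = 0"
  unfolding K_def by auto

lemma ntrees_identify_root:
  assumes "wf_mgraph H" "a \<in> verts H" "b \<in> verts H" "a \<noteq> b" "c \<in> verts H" "c \<noteq> b"
  shows "real (ntrees (identify a b H)) = detS (verts H - {b} - {c}) (Lap (identify a b H))"
proof -
  have "verts (identify a b H) = verts H - {b}" using verts_identify_eq[OF assms(2,4)] by simp
  moreover have "c \<in> verts (identify a b H)" using calculation assms by simp
  ultimately show ?thesis using matrix_tree[OF wf_identify[OF assms(1)]] by metis
qed

lemma F1:
  assumes x: "x \<in> V" and y: "y \<in> V"
  shows "real (ntrees_id G x y) = K x x + K y y - 2 * K x y"
proof (cases "x = y")
  case True
  then show ?thesis by (simp add: ntrees_id_def)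
next
  case xy: False
  have nid: "ntrees_id G x y = ntrees (identify x y G)" using xy by (simp add: ntrees_id_def)
  show ?thesis
  proof (cases "x = p")
    case True
    have "real (ntrees (identify x y G)) = detS (V - {y} - {p}) (Lap (identify x y G))"
      by (rule ntrees_identify_root[OF wf x y xy pV]) (use True xy in auto)
    also have "V - {y} - {p} = W - {y}" by blast
    also have "detS (W - {y}) (Lap (identify x y G)) = detS (W - {y}) L"
      by (rule detS_cong) (use True in \<open>auto intro!: Lap_identify_off\<close>)
    also have "\<dots> = K y y" unfolding K_def using adjS_diag[OF finW, of y L] y xy True by auto
    finally show ?thesis using True nid by simp
  next
    case xp: False
    show ?thesis
    proof (cases "y = p")
      case True
      have "real (ntrees (identify x y G)) = detS (V - {y} - {x}) (Lap (identify x y G))"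
        by (rule ntrees_identify_root[OF wf x y xy x xy])
      also have "V - {y} - {x} = W - {x}" using True by blast
      also have "detS (W - {x}) (Lap (identify x y G)) = detS (W - {x}) L"
        by (rule detS_cong) (use True in \<open>auto intro!: Lap_identify_off\<close>)
      also have "\<dots> = K x x" unfolding K_def using adjS_diag[OF finW, of x L] x xp by auto
      finally show ?thesis using True nid by simp
    next
      case yp: False
      have xW: "x \<in> W" and yW: "y \<in> W" using x y xp yp by auto
      have "real (ntrees (identify x y G)) = detS (V - {y} - {p}) (Lap (identify x y G))"
        by (rule ntrees_identify_root[OF wf x y xy pV]) (use yp in auto)
      also have "V - {y} - {p} = W - {y}" by blast
      also have "detS (W - {y}) (Lap (identify x y G)) = detS (W - {y}) (mergeM x y L)"
        by (rule detS_cong) (auto intro!: Lap_identify)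
      also have "\<dots> = adjS W L x x + adjS W L y y - adjS W L x y - adjS W L y x"
        by (rule merge_lemma[OF finW xW yW xy])
      also have "adjS W L y x = adjS W L x y" using adjS_sym[OF finW xW yW, of L, OF L_sym] by simp
      finally show ?thesis using nid xp yp unfolding K_def by simp
    qed
  qed
qed

lemma jacobiK:
  assumes a: "a \<in> V" "a \<noteq> p" and b: "b \<in> V" "b \<noteq> p" and ab: "a \<noteq> b"
  shows "detS W L * detS (W - {a, b}) L = K a a * K b b - K a b * K a b"
proof -
  have aW: "a \<in> W" and bW: "b \<in> W" using a b by auto
  have "adjS W L a a * adjS W L b b - adjS W L a b * adjS W L b a = detS W L * detS (W - {a, b}) L"
    by (rule jacobi[OF finW aW bW ab D_nz])
  moreover have "adjS W L b a = adjS W L a b" using adjS_sym[OF finW aW bW, of L, OF L_sym] by simp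
  ultimately show ?thesis using a b unfolding K_def by simp
qed

lemma F2:
  assumes q: "q \<in> V" and s: "s \<in> V" and t: "t \<in> V"
  shows "detS W L * real (ntrees_id2 G p q s t) = K q q * (K s s + K t t - 2 * K s t) - (K q s - K q t)^2"
proof (cases "p = q")
  case True
  then have qp: "q = p" by simp
  show ?thesis unfolding qp by (simp add: ntrees_id2_def)
next
  case pq: False
  let ?H1 = "identify p q G"
  let ?m = "merge p q"
  have wf1: "wf_mgraph ?H1" by (rule wf_identify[OF wf])
  have V1: "verts ?H1 = V - {q}" using verts_identify_eq[OF pV pq] by simp
  have L1: "Lap ?H1 a b = L a b" if "a \<noteq> p" "a \<noteq> q" "b \<noteq> p" "b \<noteq> q" for a b
    using that by (intro Lap_identify_off) auto
  have n2: "ntrees_id2 G p q s t = ntrees_id ?H1 (?m s) (?m t)" using pq by (simp add: ntrees_id2_def)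
  show ?thesis
  proof (cases "?m s = ?m t")
    case True
    then have "ntrees_id2 G p q s t = 0" using n2 by (simp add: ntrees_id_def)
    moreover have "s = t \<or> (s = p \<and> t = q) \<or> (s = q \<and> t = p)" using merge_eq_cases[OF True] .
    ultimately show ?thesis by (auto simp: power2_eq_square algebra_simps)
  next
    case mst: False
    have n3: "ntrees_id2 G p q s t = ntrees (identify (?m s) (?m t) ?H1)"
      using n2 mst by (simp add: ntrees_id_def)
    have qW: "q \<in> W" using q pq by auto
    show ?thesis
    proof (cases "s \<notin> {p, q} \<and> t \<notin> {p, q}")
      case True
      then have ms: "?m s = s" and mt: "?m t = t" by (auto simp: merge_def)
      have st: "s \<noteq> t" using mst ms mt by simp
      have sW: "s \<in> W" and tW: "t \<in> W" using s t True by auto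
      let ?H2 = "identify s t ?H1"
      let ?B = "mergeM s t L"
      have "real (ntrees ?H2) = detS (verts ?H1 - {t} - {p}) (Lap ?H2)"
        by (rule ntrees_identify_root[OF wf1]) (use V1 True s t pV st pq in auto)
      also have "verts ?H1 - {t} - {p} = W - {q, t}" using V1 by blast
      also have "detS (W - {q, t}) (Lap ?H2) = detS (W - {q, t}) ?B"
      proof (rule detS_cong)
        fix i j assume ij: "i \<in> W - {q, t}" "j \<in> W - {q, t}"
        have "Lap ?H2 i j = mergeM s t (Lap ?H1) i j" using ij by (intro Lap_identify) auto
        also have "\<dots> = ?B i j" unfolding mergeM_def using ij True by (simp add: L1)
        finally show "Lap ?H2 i j = ?B i j" .
      qed
      finally have T2: "real (ntrees ?H2) = detS (W - {q, t}) ?B" .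
      have Bsym: "\<And>i j. ?B i j = ?B j i" by (rule mergeM_sym[OF L_sym])
      have dB: "detS W ?B = detS W L" by (rule detS_mergeM_full[OF finW sW tW st])
      have qs: "q \<noteq> s" "q \<noteq> t" using True by auto
      have J: "adjS W ?B q q * adjS W ?B t t - adjS W ?B q t * adjS W ?B t q = detS W ?B * detS (W - {q, t}) ?B"
        by (rule jacobi[OF finW qW tW qs(2)]) (use dB D_nz in simp)
      have a1: "adjS W ?B q q = adjS W L q q" by (rule row_trick(1)[OF finW sW tW st qW qs])
      have a2: "adjS W ?B t q = adjS W L t q - adjS W L s q" by (rule row_trick(2)[OF finW sW tW st qW qs])
      have a3: "adjS W ?B q t = adjS W ?B t q" by (rule adjS_sym[OF finW qW tW Bsym])
      have a4: "adjS W ?B t t = adjS W L s s + adjS W L t t - adjS W L s t - adjS W L t s"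
        using adjS_diag[OF finW tW, of ?B] merge_lemma[OF finW sW tW st, of L] by simp
      have k: "adjS W L q q = K q q" "adjS W L s s = K s s" "adjS W L t t = K t t"
        "adjS W L s t = K s t" "adjS W L t s = K s t" "adjS W L t q = K q t" "adjS W L s q = K q s"
        using K_sym[OF s t] K_sym[OF q t] K_sym[OF q s] True q s t pq unfolding K_def by auto
      have "detS W L * real (ntrees_id2 G p q s t) = detS W ?B * detS (W - {q, t}) ?B"
        using n3 ms mt T2 dB by simp
      also have "\<dots> = K q q * (K s s + K t t - 2 * K s t) - (K q s - K q t)^2"
        unfolding J[symmetric] a1 a2 a3 a4 k by (simp add: power2_eq_square algebra_simps)
      finally show ?thesis .
    next
      case False
      show ?thesis
      proof (cases "s \<in> {p, q}")
        case sin: True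
        then have tout: "t \<notin> {p, q}" using mst by (auto simp: merge_def)
        have ms: "?m s = p" and mt: "?m t = t" using sin tout by (auto simp: merge_def)
        have tW: "t \<in> W" using t tout by auto
        have qt: "q \<noteq> t" using tout by auto
        let ?H2 = "identify p t ?H1"
        have "real (ntrees ?H2) = detS (verts ?H1 - {t} - {p}) (Lap ?H2)"
          by (rule ntrees_identify_root[OF wf1]) (use V1 tout t pV pq in auto)
        also have "verts ?H1 - {t} - {p} = W - {q, t}" using V1 by blast
        also have "detS (W - {q, t}) (Lap ?H2) = detS (W - {q, t}) L"
        proof (rule detS_cong)
          fix i j assume ij: "i \<in> W - {q, t}" "j \<in> W - {q, t}"
          have "Lap ?H2 i j = Lap ?H1 i j" using ij by (intro Lap_identify_off) auto
          also have "\<dots> = L i j" using ij by (intro L1) auto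
          finally show "Lap ?H2 i j = L i j" .
        qed
        finally have T2: "real (ntrees ?H2) = detS (W - {q, t}) L" .
        have J: "detS W L * detS (W - {q, t}) L = K q q * K t t - K q t * K q t"
          by (rule jacobiK[OF q _ t _ qt]) (use pq tout in auto)
        have "detS W L * real (ntrees_id2 G p q s t) = K q q * K t t - K q t * K q t"
          using n3 ms mt T2 J by simp
        also have "\<dots> = K q q * (K s s + K t t - 2 * K s t) - (K q s - K q t)^2"
          using sin by (auto simp: power2_eq_square algebra_simps)
        finally show ?thesis .
      next
        case sout: False
        then have tin: "t \<in> {p, q}" using False by blast
        have ms: "?m s = s" and mt: "?m t = p" using sout tin by (auto simp: merge_def)
        have sW: "s \<in> W" using s sout by auto
        have qs: "q \<noteq> s" using sout by auto
        let ?H2 = "identify s p ?H1"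
        have "real (ntrees ?H2) = detS (verts ?H1 - {p} - {s}) (Lap ?H2)"
          by (rule ntrees_identify_root[OF wf1]) (use V1 sout s pV pq in auto)
        also have "verts ?H1 - {p} - {s} = W - {q, s}" using V1 by blast
        also have "detS (W - {q, s}) (Lap ?H2) = detS (W - {q, s}) L"
        proof (rule detS_cong)
          fix i j assume ij: "i \<in> W - {q, s}" "j \<in> W - {q, s}"
          have "Lap ?H2 i j = Lap ?H1 i j" using ij by (intro Lap_identify_off) auto
          also have "\<dots> = L i j" using ij by (intro L1) auto
          finally show "Lap ?H2 i j = L i j" .
        qed
        finally have T2: "real (ntrees ?H2) = detS (W - {q, s}) L" .
        have J: "detS W L * detS (W - {q, s}) L = K q q * K s s - K q s * K q s"
          by (rule jacobiK[OF q _ s _ qs]) (use pq sout in auto)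
        have ksq: "K s q = K q s" using K_sym[OF q s] by simp
        have "detS W L * real (ntrees_id2 G p q s t) = K q q * K s s - K q s * K q s"
          using n3 ms mt T2 J by simp
        also have "\<dots> = K q q * (K s s + K t t - 2 * K s t) - (K q s - K q t)^2"
          using tin ksq by (auto simp: power2_eq_square algebra_simps)
        finally show ?thesis .
      qed
    qed
  qed
qed

end

theorem theorem5p1:
  fixes G :: "('v,'e) mgraph"
  assumes "wf_mgraph G" and "connected_mgraph G"
  shows "(\<forall>s\<in>verts G. \<forall>t\<in>verts G. \<forall>p\<in>verts G. \<forall>q\<in>verts G.
           real (ntrees G) * real (ntrees_id2 G p q s t) =
             real (ntrees_id G s t) * real (ntrees_id G p q)
             - 1/4 * (real (ntrees_id G p s) - real (ntrees_id G q s)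
                      - real (ntrees_id G p t) + real (ntrees_id G q t))^2)
     \<and> (\<forall>s\<in>verts G. \<forall>p\<in>verts G. \<forall>q\<in>verts G.
           real (ntrees G) * real (ntrees_id2 G p q p s) =
             real (ntrees_id G p s) * real (ntrees_id G p q)
             - 1/4 * (real (ntrees_id G p s) - real (ntrees_id G q s)
                      + real (ntrees_id G p q))^2)"
proof -
  have pos: "ntrees G > 0" by (rule ntrees_pos[OF assms])
  have P: "real (ntrees G) * real (ntrees_id2 G p q s t) =
             real (ntrees_id G s t) * real (ntrees_id G p q)
             - 1/4 * (real (ntrees_id G p s) - real (ntrees_id G q s)
                      - real (ntrees_id G p t) + real (ntrees_id G q t))^2"
    if s: "s \<in> verts G" and t: "t \<in> verts G" and p: "p \<in> verts G" and q: "q \<in> verts G" for s t p q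
  proof -
    interpret R: rooted G p using assms(1) p pos by unfold_locales
    have E: "real (ntrees G) * real (ntrees_id2 G p q s t)
        = R.K q q * (R.K s s + R.K t t - 2 * R.K s t) - (R.K q s - R.K q t)^2"
      using R.F2[OF q s t] R.D_eq by simp
    show ?thesis
      unfolding E R.F1[OF s t] R.F1[OF p q] R.F1[OF p s] R.F1[OF q s] R.F1[OF p t] R.F1[OF q t]
      by (simp add: power2_eq_square algebra_simps)
  qed
  have Q: "real (ntrees G) * real (ntrees_id2 G p q p s) =
             real (ntrees_id G p s) * real (ntrees_id G p q)
             - 1/4 * (real (ntrees_id G p s) - real (ntrees_id G q s)
                      + real (ntrees_id G p q))^2"
    if s: "s \<in> verts G" and p: "p \<in> verts G" and q: "q \<in> verts G" for s p q
  proof -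
    interpret R: rooted G p using assms(1) p pos by unfold_locales
    have E: "real (ntrees G) * real (ntrees_id2 G p q p s)
        = R.K q q * (R.K p p + R.K s s - 2 * R.K p s) - (R.K q p - R.K q s)^2"
      using R.F2[OF q p s] R.D_eq by simp
    show ?thesis
      unfolding E R.F1[OF p s] R.F1[OF p q] R.F1[OF q s]
      by (simp add: power2_eq_square algebra_simps)
  qed
  show ?thesis using P Q by blast
qed

end
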